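(* For $n\ge2$, the assignment $\lambda_{kl}\mapsto\lambda_{kl}$ ($1\le k\ne l\le n$) defines an injective homomorphism from the virtual pure braid group $VP_n$ into $PL_n\le TVP_n$. In particular, $VP_n$ is isomorphic to the subgroup of $TVP_n$ generated by the elements $\lambda_{kl}$, $1\le k\neq l\le n$.
   Context: For $n\ge 2$, the twisted virtual braid group $TVB_n$ is the group with generators $\sigma_1,\dots,\sigma_{n-1}$, $\rho_1,\dots,\rho_{n-1}$, $\gamma_1,\dots,\gamma_n$ and defining relations: $\sigma_i\sigma_{i+1}\sigma_i=\sigma_{i+1}\sigma_i\sigma_{i+1}$ ($1\le i\le n-2$); $\sigma_i\sigma_j=\sigma_j\sigma_i$ ($|i-j|\ge 2$); $\rho_i^2=1$; $\rho_i\rho_j=\rho_j\rho_i$ ($|i-j|\ge2$); $\rho_i\rho_{i+1}\rho_i=\rho_{i+1}\rho_i\rho_{i+1}$ ($1\le i\le n-2$); $\sigma_i\rho_j=\rho_j\sigma_i$ ($|i-j|\ge 2$); $\rho_i\rho_{i+1}\sigma_i=\sigma_{i+1}\rho_i\rho_{i+1}$ ($1\le i\le n-2$); $\gamma_i^2=1$ and $\gamma_i\gamma_j=\gamma_j\gamma_i$ (all $i,j$); $\gamma_j\rho_i=\rho_i\gamma_j$ and $\gamma_j\sigma_i=\sigma_i\gamma_j$ for $j\notin\{i,i+1\}$; $\rho_i\gamma_i=\gamma_{i+1}\rho_i$ ($1\le i\le n-1$); $\rho_i\sigma_i\rho_i=\gamma_{i+1}\gamma_i\sigma_i\gamma_i\gamma_{i+1}$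 ($1\le i\le n-1$). $TVP_n$ is the kernel of $\varphi_P:TVB_n\to S_n$, $\sigma_i,\rho_i\mapsto(i,i+1)$, $\gamma_j\mapsto e$. In $TVB_n$ define $\lambda_{i,i+1}=\rho_i\sigma_i^{-1}$, $\lambda_{i+1,i}=\rho_i\lambda_{i,i+1}\rho_i$ ($1\le i\le n-1$), and for $1\le i<j-1\le n-1$: $\lambda_{ij}=\rho_{j-1}\cdots\rho_{i+1}\lambda_{i,i+1}\rho_{i+1}\cdots\rho_{j-1}$, $\lambda_{ji}=\rho_{j-1}\cdots\rho_{i+1}\lambda_{i+1,i}\rho_{i+1}\cdots\rho_{j-1}$. $A_n=\langle\gamma_1,\dots,\gamma_n\rangle$; $\psi_P:TVP_n\to A_n$ is the homomorphism with $\lambda_{kl}\mapsto e$, $\gamma_j\mapsto\gamma_j$; $PL_n=\ker\psi_P$. The virtual pure braid group $VP_n$ is the abstract group with generators $\lambda_{ij}$, $1\le i\ne j\le n$, and defining relations $\lambda_{ij}\lambda_{kl}=\lambda_{kl}\lambda_{ij}$ and $\lambda_{ki}\lambda_{kj}\lambda_{ij}=\lambda_{ij}\lambda_{kj}\lambda_{ki}$, where distinct letters denote distinct indices. *)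

theory Defs
  imports "HOL-Algebra.Algebra"
begin

text \<open>A word is a list of letters; (g, True) stands for g and (g, False) for g inverse.\<close>
type_synonym 'g word = "('g \<times> bool) list"

definition winv :: "'g word \<Rightarrow> 'g word" where
  "winv w = rev (map (\<lambda>(g, b). (g, \<not> b)) w)"

inductive word_eq :: "('g word \<times> 'g word) set \<Rightarrow> 'g word \<Rightarrow> 'g word \<Rightarrow> bool"
  for R where
  refl: "word_eq R w w"
| sym: "word_eq R u v \<Longrightarrow> word_eq R v u"
| trans: "word_eq R u v \<Longrightarrow> word_eq R v w \<Longrightarrow> word_eq R u w"
| cancel: "word_eq R (u @ [(a, b), (a, \<not> b)] @ v) (u @ v)"
| rel: "(l, r) \<in> R \<Longrightarrow> word_eq R (u @ l @ v) (u @ r @ v)"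

definition wclass :: "('g word \<times> 'g word) set \<Rightarrow> 'g word \<Rightarrow> 'g word set" where
  "wclass R w = {v. word_eq R v w}"

definition pres_group :: "'g set \<Rightarrow> ('g word \<times> 'g word) set \<Rightarrow> 'g word set monoid" where
  "pres_group Gs R = monoid.make {wclass R w | w. set w \<subseteq> Gs \<times> UNIV}
     (\<lambda>A B. {v. \<exists>a\<in>A. \<exists>b\<in>B. word_eq R v (a @ b)}) (wclass R [])"

definition gw :: "'g \<Rightarrow> 'g word" where
  "gw g = [(g, True)]"

text \<open>S i = sigma_i, Rh i = rho_i, G j = gamma_j.\<close>
datatype tvb_gen = S nat | Rh nat | G nat

definition tvb_gens :: "nat \<Rightarrow> tvb_gen set" where
  "tvb_gens n = {S i | i. 1 \<le> i \<and> i \<le> n - 1} \<union> {Rh i | i. 1 \<le> i \<and> i \<le> n - 1}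
     \<union> {G j | j. 1 \<le> j \<and> j \<le> n}"

definition tvb_rels :: "nat \<Rightarrow> (tvb_gen word \<times> tvb_gen word) set" where
  "tvb_rels n =
     {(gw (S i) @ gw (S (i+1)) @ gw (S i), gw (S (i+1)) @ gw (S i) @ gw (S (i+1))) | i.
        1 \<le> i \<and> i \<le> n - 2}
   \<union> {(gw (S i) @ gw (S j), gw (S j) @ gw (S i)) | i j.
        1 \<le> i \<and> i \<le> n - 1 \<and> 1 \<le> j \<and> j \<le> n - 1 \<and> (i + 2 \<le> j \<or> j + 2 \<le> i)}
   \<union> {(gw (Rh i) @ gw (Rh i), []) | i. 1 \<le> i \<and> i \<le> n - 1}
   \<union> {(gw (Rh i) @ gw (Rh j), gw (Rh j) @ gw (Rh i)) | i j.
        1 \<le> i \<and> i \<le> n - 1 \<and> 1 \<le> j \<and> j \<le> n - 1 \<and> (i + 2 \<le> j \<or> j + 2 \<le> i)}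
   \<union> {(gw (Rh i) @ gw (Rh (i+1)) @ gw (Rh i), gw (Rh (i+1)) @ gw (Rh i) @ gw (Rh (i+1))) | i.
        1 \<le> i \<and> i \<le> n - 2}
   \<union> {(gw (S i) @ gw (Rh j), gw (Rh j) @ gw (S i)) | i j.
        1 \<le> i \<and> i \<le> n - 1 \<and> 1 \<le> j \<and> j \<le> n - 1 \<and> (i + 2 \<le> j \<or> j + 2 \<le> i)}
   \<union> {(gw (Rh i) @ gw (Rh (i+1)) @ gw (S i), gw (S (i+1)) @ gw (Rh i) @ gw (Rh (i+1))) | i.
        1 \<le> i \<and> i \<le> n - 2}
   \<union> {(gw (G i) @ gw (G i), []) | i. 1 \<le> i \<and> i \<le> n}
   \<union> {(gw (G i) @ gw (G j), gw (G j) @ gw (G i)) | i j. 1 \<le> i \<and> i \<le> n \<and> 1 \<le> j \<and> j \<le> n}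
   \<union> {(gw (G j) @ gw (Rh i), gw (Rh i) @ gw (G j)) | i j.
        1 \<le> i \<and> i \<le> n - 1 \<and> 1 \<le> j \<and> j \<le> n \<and> j \<noteq> i \<and> j \<noteq> i + 1}
   \<union> {(gw (G j) @ gw (S i), gw (S i) @ gw (G j)) | i j.
        1 \<le> i \<and> i \<le> n - 1 \<and> 1 \<le> j \<and> j \<le> n \<and> j \<noteq> i \<and> j \<noteq> i + 1}
   \<union> {(gw (Rh i) @ gw (G i), gw (G (i+1)) @ gw (Rh i)) | i. 1 \<le> i \<and> i \<le> n - 1}
   \<union> {(gw (Rh i) @ gw (S i) @ gw (Rh i),
        gw (G (i+1)) @ gw (G i) @ gw (S i) @ gw (G i) @ gw (G (i+1))) | i. 1 \<le> i \<and> i \<le> n - 1}"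

definition TVB :: "nat \<Rightarrow> tvb_gen word set monoid" where
  "TVB n = pres_group (tvb_gens n) (tvb_rels n)"

definition tvb_el :: "nat \<Rightarrow> tvb_gen word \<Rightarrow> tvb_gen word set" where
  "tvb_el n w = wclass (tvb_rels n) w"

fun letter_perm :: "tvb_gen \<Rightarrow> nat \<Rightarrow> nat" where
  "letter_perm (S i) = (\<lambda>x. if x = i then i + 1 else if x = i + 1 then i else x)"
| "letter_perm (Rh i) = (\<lambda>x. if x = i then i + 1 else if x = i + 1 then i else x)"
| "letter_perm (G j) = id"

definition perm_word :: "tvb_gen word \<Rightarrow> nat \<Rightarrow> nat" where
  "perm_word w = foldr (\<lambda>(g, b) p. letter_perm g \<circ> p) w id"

text \<open>TVP_n = ker phi_P (transpositions are involutions, so inverse letters map to the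
  same transposition).\<close>
definition TVP :: "nat \<Rightarrow> tvb_gen word set set" where
  "TVP n = {x \<in> carrier (TVB n). \<exists>w. set w \<subseteq> tvb_gens n \<times> UNIV \<and> x = tvb_el n w
              \<and> perm_word w = id}"

definition rhos :: "nat \<Rightarrow> nat \<Rightarrow> tvb_gen word" where
  "rhos i j = map (\<lambda>k. (Rh k, True)) (rev [i+1..<j])"

definition lam_up :: "nat \<Rightarrow> tvb_gen word" where
  "lam_up i = [(Rh i, True), (S i, False)]"

definition lam_down :: "nat \<Rightarrow> tvb_gen word" where
  "lam_down i = [(Rh i, True)] @ lam_up i @ [(Rh i, True)]"

definition lam_word :: "nat \<Rightarrow> nat \<Rightarrow> tvb_gen word" where
  "lam_word k l = (if k < l then rhos k l @ lam_up k @ rev (rhos k l)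
                   else rhos l k @ lam_down l @ rev (rhos l k))"

definition lam_el :: "nat \<Rightarrow> nat \<Rightarrow> nat \<Rightarrow> tvb_gen word set" where
  "lam_el n k l = tvb_el n (lam_word k l)"

definition gamma_el :: "nat \<Rightarrow> nat \<Rightarrow> tvb_gen word set" where
  "gamma_el n j = tvb_el n (gw (G j))"

definition vp_gens :: "nat \<Rightarrow> (nat \<times> nat) set" where
  "vp_gens n = {(i, j). 1 \<le> i \<and> i \<le> n \<and> 1 \<le> j \<and> j \<le> n \<and> i \<noteq> j}"

definition vp_rels :: "nat \<Rightarrow> ((nat \<times> nat) word \<times> (nat \<times> nat) word) set" where
  "vp_rels n =
     {(gw (i, j) @ gw (k, l), gw (k, l) @ gw (i, j)) | i j k l.
        i \<in> {1..n} \<and> j \<in> {1..n} \<and> k \<in> {1..n} \<and> l \<in> {1..n} \<and> distinct [i, j, k, l]}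
   \<union> {(gw (k, i) @ gw (k, j) @ gw (i, j), gw (i, j) @ gw (k, j) @ gw (k, i)) | i j k.
        i \<in> {1..n} \<and> j \<in> {1..n} \<and> k \<in> {1..n} \<and> distinct [i, j, k]}"

definition VP :: "nat \<Rightarrow> (nat \<times> nat) word set monoid" where
  "VP n = pres_group (vp_gens n) (vp_rels n)"

definition vp_gen :: "nat \<Rightarrow> nat \<Rightarrow> nat \<Rightarrow> (nat \<times> nat) word set" where
  "vp_gen n k l = wclass (vp_rels n) (gw (k, l))"

end

theory Submission
  imports Defs
begin


lemma we_ctx: "word_eq R u v \<Longrightarrow> word_eq R (a @ u @ b) (a @ v @ b)"
proof (induction rule: word_eq.induct)
  case (refl w) then show ?case by (blast intro: word_eq.refl)
next
  case (sym u v) then show ?case by (blast intro: word_eq.sym)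
next
  case (trans u v w) then show ?case by (metis word_eq.trans)
next
  case (cancel u x y v)
  have "word_eq R ((a @ u) @ [(x, y), (x, \<not> y)] @ (v @ b)) ((a @ u) @ (v @ b))"
    by (rule word_eq.cancel)
  then show ?case by simp
next
  case (rel l r u v)
  have "word_eq R ((a @ u) @ l @ (v @ b)) ((a @ u) @ r @ (v @ b))"
    by (rule word_eq.rel[OF rel])
  then show ?case by simp
qed

lemma we_trans: "word_eq R u v \<Longrightarrow> word_eq R v w \<Longrightarrow> word_eq R u w"
  by (rule word_eq.trans)
lemma we_sym: "word_eq R u v \<Longrightarrow> word_eq R v u"
  by (rule word_eq.sym)
lemma we_refl: "word_eq R u u"
  by (rule word_eq.refl)

lemma we_app: "word_eq R u u' \<Longrightarrow> word_eq R v v' \<Longrightarrow> word_eq R (u @ v) (u' @ v')"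
proof -
  assume a: "word_eq R u u'" and b: "word_eq R v v'"
  have "word_eq R ([] @ u @ v) ([] @ u' @ v)" by (rule we_ctx[OF a])
  moreover have "word_eq R (u' @ v @ []) (u' @ v' @ [])" by (rule we_ctx[OF b])
  ultimately show ?thesis by (simp add: we_trans)
qed

lemma we_rel: "(l, r) \<in> R \<Longrightarrow> word_eq R l r"
  using word_eq.rel[of l r R "[]" "[]"] by simp

lemma we_cancel1: "word_eq R [(x, y), (x, \<not> y)] []"
  using word_eq.cancel[of R "[]" x y "[]"] by simp

lemma winv_Nil[simp]: "winv [] = []" by (simp add: winv_def)
lemma winv_Cons[simp]: "winv ((g,b) # w) = winv w @ [(g, \<not> b)]" by (simp add: winv_def)
lemma winv_append[simp]: "winv (u @ v) = winv v @ winv u" by (simp add: winv_def)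
lemma winv_winv[simp]: "winv (winv w) = w" by (induct w) (auto simp: winv_def)
lemma set_winv[simp]: "set (winv w) = (\<lambda>(g,b). (g, \<not> b)) ` set w"
  by (simp add: winv_def)

lemma we_inv_r: "word_eq R (w @ winv w) []"
proof (induct w)
  case Nil then show ?case by (simp add: we_refl)
next
  case (Cons x w)
  obtain g b where x: "x = (g,b)" by (cases x)
  have "word_eq R ([(g,b)] @ (w @ winv w) @ [(g, \<not> b)]) ([(g,b)] @ [] @ [(g, \<not> b)])"
    by (rule we_ctx[OF Cons])
  then have "word_eq R ((g,b) # w @ winv w @ [(g, \<not> b)]) [(g,b), (g, \<not> b)]" by simp
  then show ?case using x we_cancel1 we_trans by fastforce
qed

lemma we_inv_l: "word_eq R (winv w @ w) []"
  using we_inv_r[of R "winv w"] by simp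

lemma we_winv: "word_eq R u v \<Longrightarrow> word_eq R (winv u) (winv v)"
proof -
  assume a: "word_eq R u v"
  have "word_eq R (winv u @ u @ winv v) (winv u @ v @ winv v)" by (rule we_ctx[OF a])
  moreover have "word_eq R (winv u @ v @ winv v) (winv u @ [])"
    using we_app[OF we_refl we_inv_r] by blast
  moreover have "word_eq R ((winv u @ u) @ winv v) ([] @ winv v)"
    using we_app[OF we_inv_l we_refl] by blast
  ultimately show ?thesis by (metis append_Nil append_Nil2 append_assoc we_trans we_sym)
qed

lemma wclass_eq_iff: "wclass R u = wclass R v \<longleftrightarrow> word_eq R u v"
proof
  assume "wclass R u = wclass R v"
  then have "u \<in> wclass R v" by (auto simp: wclass_def we_refl)
  then show "word_eq R u v" by (simp add: wclass_def)
next
  assume "word_eq R u v"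
  then show "wclass R u = wclass R v" by (auto simp: wclass_def intro: we_trans we_sym)
qed

lemma in_wclass: "v \<in> wclass R w \<longleftrightarrow> word_eq R v w" by (simp add: wclass_def)

lemma carrier_pg: "carrier (pres_group Gs R) = {wclass R w | w. set w \<subseteq> Gs \<times> UNIV}"
  by (simp add: pres_group_def monoid.defs)
lemma one_pg: "\<one>\<^bsub>pres_group Gs R\<^esub> = wclass R []"
  by (simp add: pres_group_def monoid.defs)
lemma mult_pg: "wclass R u \<otimes>\<^bsub>pres_group Gs R\<^esub> wclass R v = wclass R (u @ v)"
proof -
  have "{x. \<exists>a\<in>wclass R u. \<exists>b\<in>wclass R v. word_eq R x (a @ b)} = wclass R (u @ v)"
  proof (safe)
    fix x a b assume "a \<in> wclass R u" "b \<in> wclass R v" "word_eq R x (a @ b)"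
    then show "x \<in> wclass R (u @ v)" by (auto simp: in_wclass intro: we_trans we_app)
  next
    fix x assume "x \<in> wclass R (u @ v)"
    then have "word_eq R x (u @ v)" by (simp add: in_wclass)
    moreover have "u \<in> wclass R u" "v \<in> wclass R v" by (auto simp: in_wclass we_refl)
    ultimately show "\<exists>a\<in>wclass R u. \<exists>b\<in>wclass R v. word_eq R x (a @ b)"
      by (meson)
  qed
  then show ?thesis by (simp add: pres_group_def monoid.defs)
qed

lemma group_pg: "group (pres_group Gs R)"
proof (rule groupI)
  fix x y assume "x \<in> carrier (pres_group Gs R)" "y \<in> carrier (pres_group Gs R)"
  then show "x \<otimes>\<^bsub>pres_group Gs R\<^esub> y \<in> carrier (pres_group Gs R)"
    by (clarsimp simp: carrier_pg mult_pg) (rule_tac x="w@wa" in exI, auto)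
next
  show "\<one>\<^bsub>pres_group Gs R\<^esub> \<in> carrier (pres_group Gs R)"
    by (auto simp: carrier_pg one_pg)
next
  fix x y z assume "x \<in> carrier (pres_group Gs R)" "y \<in> carrier (pres_group Gs R)"
    "z \<in> carrier (pres_group Gs R)"
  then show "x \<otimes>\<^bsub>pres_group Gs R\<^esub> y \<otimes>\<^bsub>pres_group Gs R\<^esub> z =
       x \<otimes>\<^bsub>pres_group Gs R\<^esub> (y \<otimes>\<^bsub>pres_group Gs R\<^esub> z)"
    by (auto simp: carrier_pg mult_pg)
next
  fix x assume "x \<in> carrier (pres_group Gs R)"
  then show "\<one>\<^bsub>pres_group Gs R\<^esub> \<otimes>\<^bsub>pres_group Gs R\<^esub> x = x"
    by (auto simp: carrier_pg mult_pg one_pg)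
next
  fix x assume "x \<in> carrier (pres_group Gs R)"
  then obtain w where w: "x = wclass R w" "set w \<subseteq> Gs \<times> UNIV" by (auto simp: carrier_pg)
  have "wclass R (winv w) \<in> carrier (pres_group Gs R)"
    using w(2) by (auto simp: carrier_pg intro!: exI[of _ "winv w"])
  moreover have "wclass R (winv w) \<otimes>\<^bsub>pres_group Gs R\<^esub> x = \<one>\<^bsub>pres_group Gs R\<^esub>"
    by (simp add: w mult_pg one_pg wclass_eq_iff we_inv_l)
  ultimately show "\<exists>y\<in>carrier (pres_group Gs R). y \<otimes>\<^bsub>pres_group Gs R\<^esub> x = \<one>\<^bsub>pres_group Gs R\<^esub>"
    by blast
qed

lemma inv_pg: "set w \<subseteq> Gs \<times> UNIV \<Longrightarrow> inv\<^bsub>pres_group Gs R\<^esub> (wclass R w) = wclass R (winv w)"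
proof -
  assume w: "set w \<subseteq> Gs \<times> UNIV"
  interpret group "pres_group Gs R" by (rule group_pg)
  have c1: "wclass R w \<in> carrier (pres_group Gs R)" using w by (auto simp: carrier_pg)
  have c2: "wclass R (winv w) \<in> carrier (pres_group Gs R)" using w by (auto simp: carrier_pg intro!: exI[of _ "winv w"])
  have "wclass R (winv w) \<otimes>\<^bsub>pres_group Gs R\<^esub> wclass R w = \<one>\<^bsub>pres_group Gs R\<^esub>"
    by (simp add: mult_pg one_pg wclass_eq_iff we_inv_l)
  then show ?thesis using inv_equality[OF _ c1 c2] by simp
qed


abbreviation "TE n \<equiv> word_eq (tvb_rels n)"
abbreviation rl :: "nat \<Rightarrow> tvb_gen \<times> bool" where "rl i \<equiv> (Rh i, True)"
abbreviation sl :: "nat \<Rightarrow> tvb_gen \<times> bool" where "sl i \<equiv> (S i, True)"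
abbreviation ti :: "nat \<Rightarrow> tvb_gen \<times> bool" where "ti i \<equiv> (S i, False)"

lemma rel_rr: "1 \<le> i \<Longrightarrow> i \<le> n - 1 \<Longrightarrow> TE n [rl i, rl i] []"
  by (rule we_rel) (simp add: tvb_rels_def gw_def)
lemma rel_rfar: "1 \<le> i \<Longrightarrow> i \<le> n - 1 \<Longrightarrow> 1 \<le> j \<Longrightarrow> j \<le> n - 1 \<Longrightarrow> i + 2 \<le> j \<or> j + 2 \<le> i
  \<Longrightarrow> TE n [rl i, rl j] [rl j, rl i]"
  by (rule we_rel) (simp add: tvb_rels_def gw_def)
lemma rel_rbraid: "1 \<le> i \<Longrightarrow> i \<le> n - 2 \<Longrightarrow> TE n [rl i, rl (i+1), rl i] [rl (i+1), rl i, rl (i+1)]"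
  by (rule we_rel) (simp add: tvb_rels_def gw_def)
lemma rel_sfar: "1 \<le> i \<Longrightarrow> i \<le> n - 1 \<Longrightarrow> 1 \<le> j \<Longrightarrow> j \<le> n - 1 \<Longrightarrow> i + 2 \<le> j \<or> j + 2 \<le> i
  \<Longrightarrow> TE n [sl i, sl j] [sl j, sl i]"
  by (rule we_rel) (simp add: tvb_rels_def gw_def)
lemma rel_srfar: "1 \<le> i \<Longrightarrow> i \<le> n - 1 \<Longrightarrow> 1 \<le> j \<Longrightarrow> j \<le> n - 1 \<Longrightarrow> i + 2 \<le> j \<or> j + 2 \<le> i
  \<Longrightarrow> TE n [sl i, rl j] [rl j, sl i]"
  by (rule we_rel) (simp add: tvb_rels_def gw_def)
lemma rel_sbraid: "1 \<le> i \<Longrightarrow> i \<le> n - 2 \<Longrightarrow> TE n [sl i, sl (i+1), sl i] [sl (i+1), sl i, sl (i+1)]"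
  by (rule we_rel) (simp add: tvb_rels_def gw_def)
lemma rel_mixed: "1 \<le> i \<Longrightarrow> i \<le> n - 2 \<Longrightarrow> TE n [rl i, rl (i+1), sl i] [sl (i+1), rl i, rl (i+1)]"
  by (rule we_rel) (simp add: tvb_rels_def gw_def)

declare we_trans[trans]

lemma tctx: "TE n l r \<Longrightarrow> TE n (u @ l @ v) (u @ r @ v)"
  by (rule we_ctx)

lemma rflip: "1 \<le> i \<Longrightarrow> i \<le> n - 1 \<Longrightarrow> TE n [(Rh i, False)] [rl i]"
proof -
  assume a: "1 \<le> i" "i \<le> n - 1"
  have "TE n [(Rh i, False)] [(Rh i, False), rl i, rl i]"
    using tctx[OF we_sym[OF rel_rr[OF a]], of "[(Rh i, False)]" "[]"] by simp
  also have "TE n ... [rl i]"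
    using tctx[OF we_cancel1[of "tvb_rels n" "Rh i" False], of "[]" "[rl i]"] by simp
  finally show ?thesis .
qed

lemma comm_inv: "TE n (u @ v) (v @ u) \<Longrightarrow> TE n (winv u @ v) (v @ winv u)"
proof -
  assume h: "TE n (u @ v) (v @ u)"
  have "TE n (winv u @ v) (winv u @ v @ u @ winv u)"
    using tctx[OF we_sym[OF we_inv_r[of "tvb_rels n" u]], of "winv u @ v" "[]"] by simp
  also have "TE n ... (winv u @ u @ v @ winv u)"
    using tctx[OF we_sym[OF h], of "winv u" "winv u"] by simp
  also have "TE n ... (v @ winv u)"
    using tctx[OF we_inv_l[of "tvb_rels n" u], of "[]" "v @ winv u"] by simp
  finally show ?thesis .
qed

lemma rel_trfar: "1 \<le> i \<Longrightarrow> i \<le> n - 1 \<Longrightarrow> 1 \<le> j \<Longrightarrow> j \<le> n - 1 \<Longrightarrow> i + 2 \<le> j \<or> j + 2 \<le> i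
  \<Longrightarrow> TE n [ti i, rl j] [rl j, ti i]"
  using comm_inv[of n "[sl i]" "[rl j]"] rel_srfar[of i n j] by simp

lemma rel_ttfar: "1 \<le> i \<Longrightarrow> i \<le> n - 1 \<Longrightarrow> 1 \<le> j \<Longrightarrow> j \<le> n - 1 \<Longrightarrow> i + 2 \<le> j \<or> j + 2 \<le> i
  \<Longrightarrow> TE n [ti i, ti j] [ti j, ti i]"
proof -
  assume a: "1 \<le> i" "i \<le> n - 1" "1 \<le> j" "j \<le> n - 1" "i + 2 \<le> j \<or> j + 2 \<le> i"
  have "TE n [ti i, sl j] [sl j, ti i]"
    using comm_inv[of n "[sl i]" "[sl j]"] rel_sfar[OF a] by simp
  then have "TE n [ti j, ti i] [ti i, ti j]"
    using comm_inv[of n "[sl j]" "[ti i]"] we_sym by fastforce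
  then show ?thesis by (rule we_sym)
qed

lemma rel_tbraid: "1 \<le> i \<Longrightarrow> i \<le> n - 2 \<Longrightarrow> TE n [ti i, ti (i+1), ti i] [ti (i+1), ti i, ti (i+1)]"
  using we_winv[OF rel_sbraid[of i n]] by simp

lemma rel_M: "1 \<le> i \<Longrightarrow> i \<le> n - 2 \<Longrightarrow> TE n [ti i, rl (i+1), rl i] [rl (i+1), rl i, ti (i+1)]"
proof -
  assume a: "1 \<le> i" "i \<le> n - 2"
  have f1: "TE n [(Rh i, False)] [rl i]" using rflip a by simp
  have f2: "TE n [(Rh (i+1), False)] [rl (i+1)]" using rflip a by simp
  have "TE n [ti i, rl (i+1), rl i] [ti i, (Rh (i+1), False), (Rh i, False)]"
    using tctx[OF we_app[OF we_sym[OF f2] we_sym[OF f1]], of "[ti i]" "[]"] by simp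
  also have "TE n ... [(Rh (i+1), False), (Rh i, False), ti (i+1)]"
    using we_winv[OF rel_mixed[OF a]] by simp
  also have "TE n ... [rl (i+1), rl i, ti (i+1)]"
    using tctx[OF we_app[OF f2 f1], of "[]" "[ti (i+1)]"] by simp
  finally show ?thesis .
qed

definition rng :: "nat \<Rightarrow> nat \<Rightarrow> bool" where "rng n i \<longleftrightarrow> 1 \<le> i \<and> i \<le> n - 1"

lemma flipall: "\<forall>i\<in>set xs. rng n i \<Longrightarrow> TE n (winv (map rl xs)) (map rl (rev xs))"
proof (induct xs)
  case Nil then show ?case by (simp add: we_refl)
next
  case (Cons i xs)
  then have "TE n (winv (map rl xs) @ [(Rh i, False)]) (map rl (rev xs) @ [rl i])"
    by (intro we_app rflip) (auto simp: rng_def)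
  then show ?case by simp
qed

lemma rrev: "\<forall>i\<in>set xs. rng n i \<Longrightarrow> \<forall>i\<in>set js. rng n i \<Longrightarrow> TE n (map rl xs) (map rl js)
  \<Longrightarrow> TE n (map rl (rev xs)) (map rl (rev js))"
proof -
  assume a: "\<forall>i\<in>set xs. rng n i" "\<forall>i\<in>set js. rng n i" "TE n (map rl xs) (map rl js)"
  have "TE n (map rl (rev xs)) (winv (map rl xs))" using flipall[OF a(1)] by (rule we_sym)
  also have "TE n ... (winv (map rl js))" using we_winv[OF a(3)] .
  also have "TE n ... (map rl (rev js))" using flipall[OF a(2)] .
  finally show ?thesis .
qed

lemma rr_cancel: "\<forall>i\<in>set xs. rng n i \<Longrightarrow> TE n (map rl xs @ map rl (rev xs)) []"
proof (induct xs)
  case Nil then show ?case by (simp add: we_refl)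
next
  case (Cons i xs)
  then have h1: "TE n ([rl i] @ (map rl xs @ map rl (rev xs)) @ [rl i]) ([rl i] @ [] @ [rl i])"
    by (intro we_ctx) auto
  have h2: "TE n [rl i, rl i] []" using Cons(2) rel_rr by (simp add: rng_def)
  show ?case using we_trans[OF h1] h2 by simp
qed

lemma rr_cancel': "\<forall>i\<in>set xs. rng n i \<Longrightarrow> TE n (map rl (rev xs) @ map rl xs) []"
  using rr_cancel[of "rev xs" n] by simp

lemma comm_far: "rng n m \<Longrightarrow> \<forall>i\<in>set xs. rng n i \<and> (i + 2 \<le> m \<or> m + 2 \<le> i)
   \<Longrightarrow> TE n (rl m # map rl xs) (map rl xs @ [rl m])"
proof (induct xs)
  case Nil then show ?case by (simp add: we_refl)
next
  case (Cons i xs)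
  have h1: "TE n ([] @ [rl m, rl i] @ map rl xs) ([] @ [rl i, rl m] @ map rl xs)"
    using Cons(2,3) by (intro we_ctx rel_rfar) (auto simp: rng_def)
  have h2: "TE n ([rl i] @ (rl m # map rl xs) @ []) ([rl i] @ (map rl xs @ [rl m]) @ [])"
    using Cons by (intro we_ctx) auto
  show ?case using we_trans[OF h1] h2 by simp
qed


lemma rhos_eq: "rhos a b = map rl (rev [a+1..<b])" by (simp add: rhos_def)
lemma rhos_Suc: "a + 1 \<le> b \<Longrightarrow> rhos a (Suc b) = rl b # rhos a b" by (simp add: rhos_def)
lemma rhos_low: "a + 2 \<le> b \<Longrightarrow> rhos a b = rhos (Suc a) b @ [rl (Suc a)]"
  by (simp add: rhos_def upt_rec)
lemma rhos_empty: "b \<le> a + 1 \<Longrightarrow> rhos a b = []" by (simp add: rhos_def)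
lemma rev_rhos: "rev (rhos a b) = map rl [a+1..<b]" by (simp add: rhos_def rev_map)

lemma rhos_far: "rng n m \<Longrightarrow> b \<le> n \<Longrightarrow> m + 2 \<le> a + 1 \<or> b + 1 \<le> m \<Longrightarrow>
  TE n (rl m # rhos a b) (rhos a b @ [rl m])"
  unfolding rhos_eq by (rule comm_far) (auto simp: rng_def)
lemma rhos_far': "rng n m \<Longrightarrow> b \<le> n \<Longrightarrow> m + 2 \<le> a + 1 \<or> b + 1 \<le> m \<Longrightarrow>
  TE n (rl m # rev (rhos a b)) (rev (rhos a b) @ [rl m])"
  unfolding rev_rhos by (rule comm_far) (auto simp: rng_def)

lemma H5: "a + 1 \<le> m \<Longrightarrow> m + 2 \<le> b \<Longrightarrow> b \<le> n \<Longrightarrow>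
  TE n (rl m # rhos a b) (rhos a b @ [rl (m+1)])"
proof -
  assume a1: "a + 1 \<le> m" and a2: "m + 2 \<le> b" and a3: "b \<le> n"
  obtain k where bk: "b = m + 2 + k" using a2 le_Suc_ex by blast
  have "m + 2 + k \<le> n \<Longrightarrow> TE n (rl m # rhos a (m+2+k)) (rhos a (m+2+k) @ [rl (m+1)])"
  proof (induct k)
    case 0
    have e: "rhos a (m+2) = rl (m+1) # rl m # rhos a m" using a1 by (simp add: rhos_Suc)
    have "TE n (rl m # rhos a (m+2)) ([rl m, rl (m+1), rl m] @ rhos a m)" using e by (simp add: we_refl)
    also have "TE n ... ([rl (m+1), rl m, rl (m+1)] @ rhos a m)"
      using tctx[OF rel_rbraid[of m n], of "[]" "rhos a m"] a1 0 by simp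
    also have "TE n ... ([rl (m+1), rl m] @ rhos a m @ [rl (m+1)])"
      using tctx[OF rhos_far[of n "m+1" m a], of "[rl (m+1), rl m]" "[]"] a1 0 by (simp add: rng_def)
    finally show ?case using e by simp
  next
    case (Suc k)
    have e: "rhos a (m + 2 + Suc k) = rl (m+2+k) # rhos a (m+2+k)"
      using a1 by (simp add: rhos_Suc)
    have "TE n (rl m # rhos a (m + 2 + Suc k)) ([rl m, rl (m+2+k)] @ rhos a (m+2+k))" using e by (simp add: we_refl)
    also have "TE n ... ([rl (m+2+k), rl m] @ rhos a (m+2+k))"
      using tctx[OF rel_rfar[of m n "m+2+k"], of "[]" "rhos a (m+2+k)"] a1 Suc(2) by simp
    also have "TE n ... ([rl (m+2+k)] @ rhos a (m+2+k) @ [rl (m+1)])"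
      using tctx[OF Suc(1), of "[rl (m+2+k)]" "[]"] Suc(2) by simp
    finally show ?case using e by simp
  qed
  then show ?thesis using bk a3 by simp
qed

lemma H5': "a + 1 \<le> m \<Longrightarrow> m + 2 \<le> b \<Longrightarrow> b \<le> n \<Longrightarrow>
  TE n (rl (m+1) # rev (rhos a b)) (rev (rhos a b) @ [rl m])"
proof -
  assume a: "a + 1 \<le> m" "m + 2 \<le> b" "b \<le> n"
  have "TE n (map rl (m # rev [a+1..<b])) (map rl (rev [a+1..<b] @ [m+1]))"
    using H5[OF a] by (simp add: rhos_eq)
  then have "TE n (map rl (rev (m # rev [a+1..<b]))) (map rl (rev (rev [a+1..<b] @ [m+1])))"
    using a by (intro rrev) (auto simp: rng_def)
  then show ?thesis by (simp add: rhos_eq rev_map we_sym)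
qed

definition sw :: "nat \<Rightarrow> nat \<Rightarrow> nat" where
  "sw m x = (if x = m then Suc m else if x = Suc m then m else x)"

definition NN :: "(nat \<Rightarrow> tvb_gen word) \<Rightarrow> nat \<Rightarrow> nat \<Rightarrow> tvb_gen word" where
  "NN Z a b = rhos a b @ Z a @ rev (rhos a b)"

locale zfam =
  fixes n :: nat and Z :: "nat \<Rightarrow> tvb_gen word"
  assumes Z1: "\<And>a m. rng n a \<Longrightarrow> rng n m \<Longrightarrow> m + 2 \<le> a \<or> a + 2 \<le> m \<Longrightarrow> TE n (rl m # Z a) (Z a @ [rl m])"
  and Z6: "\<And>a. 1 \<le> a \<Longrightarrow> a + 2 \<le> n \<Longrightarrow> TE n ([rl a, rl (a+1)] @ Z a @ [rl (a+1), rl a]) (Z (a+1))"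
  and Z7: "\<And>a. 2 \<le> a \<Longrightarrow> a \<le> n - 1 \<Longrightarrow> TE n ([rl (a-1)] @ Z a @ [rl (a-1)]) ([rl a] @ Z (a-1) @ [rl a])"
begin

lemma conjN:
  assumes ab: "1 \<le> a" "a < b" "b \<le> n" and m: "rng n m" and nx: "\<not> (m = a \<and> b = a + 1)"
  shows "TE n ([rl m] @ NN Z a b @ [rl m]) (NN Z (sw m a) (sw m b))"
proof -
  consider "m + 2 \<le> a \<or> b + 1 \<le> m" | "a + 1 \<le> m \<and> m + 2 \<le> b" | "m = b" | "m + 1 = b \<and> a + 2 \<le> b"
    | "m = a \<and> a + 2 \<le> b" | "m + 1 = a" using nx ab by linarith
  then show ?thesis
  proof cases
    case 1
    have s: "sw m a = a" "sw m b = b" using 1 ab by (auto simp: sw_def)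
    have pre: "m + 2 \<le> a + 1 \<or> b + 1 \<le> m" using 1 by linarith
    have pz1: "rng n a" using ab by (simp add: rng_def)
    have pz2: "m + 2 \<le> a \<or> a + 2 \<le> m" using 1 ab by linarith
    have "TE n ([rl m] @ NN Z a b @ [rl m]) (rhos a b @ [rl m] @ Z a @ rev (rhos a b) @ [rl m])"
      using tctx[OF rhos_far[OF m ab(3) pre], of "[]" "Z a @ rev (rhos a b) @ [rl m]"] by (simp add: NN_def)
    also have "TE n ... (rhos a b @ Z a @ [rl m] @ rev (rhos a b) @ [rl m])"
      using tctx[OF Z1[OF pz1 m pz2], of "rhos a b" "rev (rhos a b) @ [rl m]"] by simp
    also have "TE n ... (rhos a b @ Z a @ rev (rhos a b) @ [rl m, rl m])"
      using tctx[OF rhos_far'[OF m ab(3) pre], of "rhos a b @ Z a" "[rl m]"] by simp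
    also have "TE n ... (NN Z a b)"
      using tctx[OF rel_rr[of m n], of "rhos a b @ Z a @ rev (rhos a b)" "[]"] m by (simp add: rng_def NN_def)
    finally show ?thesis using s by simp
  next
    case 2
    have s: "sw m a = a" "sw m b = b" using 2 ab by (auto simp: sw_def)
    have pz1: "rng n a" using ab by (simp add: rng_def)
    have pz3: "rng n (m+1)" using ab 2 unfolding rng_def by linarith
    have pz2: "m + 1 + 2 \<le> a \<or> a + 2 \<le> m + 1" using 2 ab by linarith
    have "TE n ([rl m] @ NN Z a b @ [rl m]) (rhos a b @ [rl (m+1)] @ Z a @ rev (rhos a b) @ [rl m])"
      using tctx[OF H5[of a m b n], of "[]" "Z a @ rev (rhos a b) @ [rl m]"] 2 ab by (simp add: NN_def)
    also have "TE n ... (rhos a b @ Z a @ [rl (m+1)] @ rev (rhos a b) @ [rl m])"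
      using tctx[OF Z1[OF pz1 pz3 pz2], of "rhos a b" "rev (rhos a b) @ [rl m]"] by simp
    also have "TE n ... (rhos a b @ Z a @ rev (rhos a b) @ [rl m, rl m])"
      using tctx[OF H5'[of a m b n], of "rhos a b @ Z a" "[rl m]"] 2 ab by simp
    also have "TE n ... (NN Z a b)"
      using tctx[OF rel_rr[of m n], of "rhos a b @ Z a @ rev (rhos a b)" "[]"] m by (simp add: rng_def NN_def)
    finally show ?thesis using s by simp
  next
    case 3
    have s: "sw m a = a" "sw m b = Suc b" using 3 ab by (auto simp: sw_def)
    have "[rl m] @ NN Z a b @ [rl m] = NN Z a (Suc b)" using 3 ab by (simp add: NN_def rhos_Suc)
    then show ?thesis using s by (simp add: we_refl)
  next
    case 4
    have s: "sw m a = a" "sw m b = m" using 4 ab by (auto simp: sw_def)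
    have e0: "b = Suc m" "a + 1 \<le> m" using 4 by auto
    have e: "rhos a b = rl m # rhos a m" using e0 rhos_Suc[OF e0(2)] by simp
    have "TE n ([rl m] @ NN Z a b @ [rl m]) ([rl m, rl m] @ (NN Z a m @ [rl m, rl m]))"
      using e by (simp add: NN_def we_refl)
    also have "TE n ... ([] @ (NN Z a m @ [rl m, rl m]))"
      using tctx[OF rel_rr[of m n], of "[]"] m by (simp add: rng_def)
    also have "TE n ... (NN Z a m @ [] @ [])"
      using tctx[OF rel_rr[of m n], of "NN Z a m" "[]"] m by (simp add: rng_def)
    finally show ?thesis using s by simp
  next
    case 5
    have s: "sw m a = Suc a" "sw m b = b" using 5 ab by (auto simp: sw_def)
    have e: "rhos a b = rhos (Suc a) b @ [rl (Suc a)]" using 5 by (simp add: rhos_low)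
    have "TE n ([rl m] @ NN Z a b @ [rl m]) ([rl a] @ rhos (Suc a) b @ [rl (a+1)] @ Z a @ [rl (a+1)] @ rev (rhos (Suc a) b) @ [rl a])"
      using e 5 by (simp add: NN_def we_refl)
    also have "TE n ... (rhos (Suc a) b @ [rl a, rl (a+1)] @ Z a @ [rl (a+1)] @ rev (rhos (Suc a) b) @ [rl a])"
      using tctx[OF rhos_far[of n a b "Suc a"], of "[]"] 5 m ab by simp
    also have "TE n ... (rhos (Suc a) b @ [rl a, rl (a+1)] @ Z a @ [rl (a+1), rl a] @ rev (rhos (Suc a) b))"
      using tctx[OF we_sym[OF rhos_far'[of n a b "Suc a"]], of "rhos (Suc a) b @ [rl a, rl (a+1)] @ Z a @ [rl (a+1)]" "[]"] 5 m ab by simp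
    also have "TE n ... (rhos (Suc a) b @ Z (a+1) @ rev (rhos (Suc a) b))"
      using tctx[OF Z6[of a], of "rhos (Suc a) b" "rev (rhos (Suc a) b)"] 5 ab by simp
    finally show ?thesis using s by (simp add: NN_def)
  next
    case 6
    have s: "sw m a = m" "sw m b = b" using 6 ab by (auto simp: sw_def)
    have z7: "2 \<le> a" "a \<le> n - 1" "a - 1 = m" using 6 ab m unfolding rng_def by linarith+
    have e: "rhos m b = rhos a b @ [rl a]" using 6 ab rhos_low[of m b] by simp
    have "TE n ([rl m] @ NN Z a b @ [rl m]) (rhos a b @ [rl m] @ Z a @ rev (rhos a b) @ [rl m])"
      using tctx[OF rhos_far[OF m ab(3), of a], of "[]" "Z a @ rev (rhos a b) @ [rl m]"] 6 by (simp add: NN_def)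
    also have "TE n ... (rhos a b @ [rl m] @ Z a @ [rl m] @ rev (rhos a b))"
      using tctx[OF we_sym[OF rhos_far'[OF m ab(3), of a]], of "rhos a b @ [rl m] @ Z a" "[]"] 6 by simp
    also have "TE n ... (rhos a b @ [rl a] @ Z m @ [rl a] @ rev (rhos a b))"
      using tctx[OF Z7[OF z7(1,2)], of "rhos a b" "rev (rhos a b)"] z7(3) by simp
    finally show ?thesis using s e by (simp add: NN_def)
  qed
qed

end


lemma comm_app: "TE n (x # A) (A @ [x]) \<Longrightarrow> TE n (x # B) (B @ [x]) \<Longrightarrow> TE n (x # A @ B) (A @ B @ [x])"
proof -
  assume a: "TE n (x # A) (A @ [x])" and b: "TE n (x # B) (B @ [x])"
  have "TE n (x # A @ B) (A @ x # B)" using tctx[OF a, of "[]" B] by simp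
  also have "TE n ... (A @ B @ [x])" using tctx[OF b, of A "[]"] by simp
  finally show ?thesis .
qed

lemma up_Z1: "rng n a \<Longrightarrow> rng n m \<Longrightarrow> m + 2 \<le> a \<or> a + 2 \<le> m \<Longrightarrow> TE n (rl m # lam_up a) (lam_up a @ [rl m])"
proof -
  assume h: "rng n a" "rng n m" "m + 2 \<le> a \<or> a + 2 \<le> m"
  have "TE n [rl m, rl a, ti a] [rl a, rl m, ti a]"
    using tctx[OF rel_rfar[of m n a], of "[]" "[ti a]"] h by (auto simp: rng_def)
  also have "TE n ... [rl a, ti a, rl m]"
    using tctx[OF we_sym[OF rel_trfar[of a n m]], of "[rl a]" "[]"] h by (auto simp: rng_def)
  finally show ?thesis by (simp add: lam_up_def)
qed

lemma up_Z6: "1 \<le> a \<Longrightarrow> a + 2 \<le> n \<Longrightarrow> TE n ([rl a, rl (a+1)] @ lam_up a @ [rl (a+1), rl a]) (lam_up (a+1))"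
proof -
  assume h: "1 \<le> a" "a + 2 \<le> n"
  have "TE n [rl a, rl (a+1), rl a, ti a, rl (a+1), rl a] [rl a, rl (a+1), rl a, rl (a+1), rl a, ti (a+1)]"
    using tctx[OF rel_M[of a n], of "[rl a, rl (a+1), rl a]" "[]"] h by simp
  also have "TE n ... [rl (a+1), rl a, rl (a+1), rl (a+1), rl a, ti (a+1)]"
    using tctx[OF rel_rbraid[of a n], of "[]" "[rl (a+1), rl a, ti (a+1)]"] h by simp
  also have "TE n ... [rl (a+1), rl a, rl a, ti (a+1)]"
    using tctx[OF rel_rr[of "a+1" n], of "[rl (a+1), rl a]" "[rl a, ti (a+1)]"] h by simp
  also have "TE n ... [rl (a+1), ti (a+1)]"
    using tctx[OF rel_rr[of "a" n], of "[rl (a+1)]" "[ti (a+1)]"] h by simp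
  finally show ?thesis by (simp add: lam_up_def)
qed

lemma up_Z7i: "1 \<le> i \<Longrightarrow> i + 2 \<le> n \<Longrightarrow> TE n [rl i, rl (i+1), ti (i+1), rl i] [rl (i+1), rl i, ti i, rl (i+1)]"
proof -
  assume h: "1 \<le> i" "i + 2 \<le> n"
  have "TE n [rl (i+1), rl i, ti i, rl (i+1)] [rl (i+1), rl i, ti i, rl (i+1), rl i, rl i]"
    using tctx[OF we_sym[OF rel_rr[of i n]], of "[rl (i+1), rl i, ti i, rl (i+1)]" "[]"] h by simp
  also have "TE n ... [rl (i+1), rl i, rl (i+1), rl i, ti (i+1), rl i]"
    using tctx[OF rel_M[of i n], of "[rl (i+1), rl i]" "[rl i]"] h by simp
  also have "TE n ... [rl i, rl (i+1), rl i, rl i, ti (i+1), rl i]"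
    using tctx[OF we_sym[OF rel_rbraid[of i n]], of "[]" "[rl i, ti (i+1), rl i]"] h by simp
  also have "TE n ... [rl i, rl (i+1), ti (i+1), rl i]"
    using tctx[OF rel_rr[of i n], of "[rl i, rl (i+1)]" "[ti (i+1), rl i]"] h by simp
  finally show ?thesis by (rule we_sym)
qed

lemma up_Z7: "2 \<le> a \<Longrightarrow> a \<le> n - 1 \<Longrightarrow> TE n ([rl (a-1)] @ lam_up a @ [rl (a-1)]) ([rl a] @ lam_up (a-1) @ [rl a])"
proof -
  assume h: "2 \<le> a" "a \<le> n - 1"
  then have "1 \<le> a - 1" "a - 1 + 2 \<le> n" "a - 1 + 1 = a" by auto
  then show ?thesis using up_Z7i[of "a-1" n] by (simp add: lam_up_def)
qed

interpretation up: zfam n lam_up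
  apply unfold_locales
    apply (erule (2) up_Z1)
   apply (erule (1) up_Z6)
  apply (erule (1) up_Z7)
  done

lemma down_eq: "lam_down a = [rl a] @ lam_up a @ [rl a]" by (simp add: lam_down_def)

lemma down_Z1: "rng n a \<Longrightarrow> rng n m \<Longrightarrow> m + 2 \<le> a \<or> a + 2 \<le> m \<Longrightarrow> TE n (rl m # lam_down a) (lam_down a @ [rl m])"
proof -
  assume h: "rng n a" "rng n m" "m + 2 \<le> a \<or> a + 2 \<le> m"
  have r: "TE n (rl m # [rl a]) ([rl a] @ [rl m])" using rel_rfar[of m n a] h by (auto simp: rng_def)
  have c1: "TE n (rl m # (lam_up a @ [rl a])) ((lam_up a @ [rl a]) @ [rl m])"
    using comm_app[OF up_Z1[OF h] r] by simp
  show ?thesis using comm_app[OF r c1] unfolding down_eq by simp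
qed

lemma down_Z6: "1 \<le> a \<Longrightarrow> a + 2 \<le> n \<Longrightarrow> TE n ([rl a, rl (a+1)] @ lam_down a @ [rl (a+1), rl a]) (lam_down (a+1))"
proof -
  assume h: "1 \<le> a" "a + 2 \<le> n"
  have "TE n ([rl a, rl (a+1)] @ lam_down a @ [rl (a+1), rl a]) ([rl a, rl (a+1), rl a] @ lam_up a @ [rl a, rl (a+1), rl a])"
    by (simp add: down_eq we_refl)
  also have "TE n ... ([rl (a+1), rl a, rl (a+1)] @ lam_up a @ [rl a, rl (a+1), rl a])"
    using tctx[OF rel_rbraid[of a n], of "[]"] h by simp
  also have "TE n ... ([rl (a+1), rl a, rl (a+1)] @ lam_up a @ [rl (a+1), rl a, rl (a+1)])"
    using tctx[OF rel_rbraid[of a n], of "[rl (a+1), rl a, rl (a+1)] @ lam_up a" "[]"] h by simp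
  also have "TE n ... ([rl (a+1)] @ lam_up (a+1) @ [rl (a+1)])"
    using tctx[OF up_Z6[OF h], of "[rl (a+1)]" "[rl (a+1)]"] by simp
  finally show ?thesis by (simp add: down_eq)
qed

lemma down_Z7: "2 \<le> a \<Longrightarrow> a \<le> n - 1 \<Longrightarrow> TE n ([rl (a-1)] @ lam_down a @ [rl (a-1)]) ([rl a] @ lam_down (a-1) @ [rl a])"
proof -
  assume h: "2 \<le> a" "a \<le> n - 1"
  obtain i where ai: "a = i + 1" using h by (metis add.commute add_diff_cancel_right' le_add_diff_inverse2 le_trans one_le_numeral)
  have hi: "1 \<le> i" "i + 2 \<le> n" using h ai by auto
  have z7: "TE n ([rl i] @ lam_up (i+1) @ [rl i]) ([rl (i+1)] @ lam_up i @ [rl (i+1)])"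
    using up_Z7[OF h] ai by simp
  have "TE n ([rl i] @ lam_down (i+1) @ [rl i]) ([rl i, rl (i+1)] @ lam_up (i+1) @ [rl (i+1), rl i])"
    by (simp add: down_eq we_refl)
  also have "TE n ... ([rl i, rl (i+1), rl i, rl i] @ lam_up (i+1) @ [rl (i+1), rl i])"
    using tctx[OF we_sym[OF rel_rr[of i n]], of "[rl i, rl (i+1)]" "lam_up (i+1) @ [rl (i+1), rl i]"] hi by simp
  also have "TE n ... ([rl i, rl (i+1), rl i, rl i] @ lam_up (i+1) @ [rl i, rl i, rl (i+1), rl i])"
    using tctx[OF we_sym[OF rel_rr[of i n]], of "[rl i, rl (i+1), rl i, rl i] @ lam_up (i+1)" "[rl (i+1), rl i]"] hi by simp
  also have "TE n ... ([rl i, rl (i+1), rl i] @ ([rl (i+1)] @ lam_up i @ [rl (i+1)]) @ [rl i, rl (i+1), rl i])"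
    using tctx[OF z7, of "[rl i, rl (i+1), rl i]" "[rl i, rl (i+1), rl i]"] by simp
  also have "TE n ... ([rl (i+1), rl i, rl (i+1)] @ ([rl (i+1)] @ lam_up i @ [rl (i+1)]) @ [rl i, rl (i+1), rl i])"
    using tctx[OF rel_rbraid[of i n], of "[]"] hi by simp
  also have "TE n ... ([rl (i+1), rl i, rl (i+1)] @ ([rl (i+1)] @ lam_up i @ [rl (i+1)]) @ [rl (i+1), rl i, rl (i+1)])"
    using tctx[OF rel_rbraid[of i n], of "[rl (i+1), rl i, rl (i+1)] @ ([rl (i+1)] @ lam_up i @ [rl (i+1)])" "[]"] hi by simp
  also have "TE n ... ([rl (i+1), rl i] @ lam_up i @ [rl (i+1), rl (i+1), rl i, rl (i+1)])"
    using tctx[OF rel_rr[of "i+1" n], of "[rl (i+1), rl i]" "lam_up i @ [rl (i+1), rl (i+1), rl i, rl (i+1)]"] hi by simp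
  also have "TE n ... ([rl (i+1), rl i] @ lam_up i @ [rl i, rl (i+1)])"
    using tctx[OF rel_rr[of "i+1" n], of "[rl (i+1), rl i] @ lam_up i" "[rl i, rl (i+1)]"] hi by simp
  finally show ?thesis using ai by (simp add: down_eq)
qed

interpretation down: zfam n lam_down
  apply unfold_locales
    apply (erule (2) down_Z1)
   apply (erule (1) down_Z6)
  apply (erule (1) down_Z7)
  done

lemma lam_word_NN: "lam_word a b = (if a < b then NN lam_up a b else NN lam_down b a)"
  by (simp add: lam_word_def NN_def)

lemma sw_order: "a < b \<Longrightarrow> \<not> (m = a \<and> b = a + 1) \<Longrightarrow> sw m a < sw m b"
  by (auto simp: sw_def)

lemma conj_lam:
  assumes "1 \<le> a" "a \<le> n" "1 \<le> b" "b \<le> n" "a \<noteq> b" "rng n m"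
  shows "TE n ([rl m] @ lam_word a b @ [rl m]) (lam_word (sw m a) (sw m b))"
proof (cases "a < b")
  case True
  show ?thesis
  proof (cases "m = a \<and> b = a + 1")
    case True
    then show ?thesis using \<open>a < b\<close>
      by (simp add: lam_word_NN NN_def rhos_empty sw_def down_eq we_refl)
  next
    case False
    have "TE n ([rl m] @ NN lam_up a b @ [rl m]) (NN lam_up (sw m a) (sw m b))"
      using up.conjN[of a b n m] assms True False by simp
    then show ?thesis using True False sw_order[OF True False] by (simp add: lam_word_NN)
  qed
next
  case False
  then have ba: "b < a" using assms by simp
  show ?thesis
  proof (cases "m = b \<and> a = b + 1")
    case True
    have "TE n ([rl b, rl b] @ lam_up b @ [rl b, rl b]) ([] @ lam_up b @ [rl b, rl b])"
      using tctx[OF rel_rr[of b n], of "[]"] assms True by (simp add: rng_def)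
    also have "TE n ... (lam_up b @ [] @ [])"
      using tctx[OF rel_rr[of b n], of "lam_up b" "[]"] assms True by (simp add: rng_def)
    finally show ?thesis using True ba
      by (simp add: lam_word_NN NN_def rhos_empty sw_def down_eq)
  next
    case False
    have "TE n ([rl m] @ NN lam_down b a @ [rl m]) (NN lam_down (sw m b) (sw m a))"
      using down.conjN[of b a n m] assms ba False by simp
    then show ?thesis using ba False sw_order[OF ba False] by (simp add: lam_word_NN)
  qed
qed


definition vr :: "nat \<Rightarrow> nat \<Rightarrow> bool" where "vr n a \<longleftrightarrow> 1 \<le> a \<and> a \<le> n"

lemma sw_vr: "rng n m \<Longrightarrow> vr n a \<Longrightarrow> vr n (sw m a)"
  by (auto simp: rng_def vr_def sw_def)
lemma sw_sw[simp]: "sw m (sw m a) = a" by (auto simp: sw_def)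
lemma sw_inj[simp]: "sw m a = sw m b \<longleftrightarrow> a = b" by (auto simp: sw_def)

lemma conj2: "rng n m \<Longrightarrow> TE n ([rl m] @ U1 @ [rl m]) U2 \<Longrightarrow> TE n ([rl m] @ W1 @ [rl m]) W2
  \<Longrightarrow> TE n ([rl m] @ (U1 @ W1) @ [rl m]) (U2 @ W2)"
proof -
  assume m: "rng n m" and x: "TE n ([rl m] @ U1 @ [rl m]) U2" and y: "TE n ([rl m] @ W1 @ [rl m]) W2"
  have "TE n ([rl m] @ (U1 @ W1) @ [rl m]) (([rl m] @ U1 @ [rl m]) @ ([rl m] @ W1 @ [rl m]))"
    using tctx[OF we_sym[OF rel_rr[of m n]], of "[rl m] @ U1" "W1 @ [rl m]"] m by (simp add: rng_def)
  also have "TE n ... (U2 @ W2)" by (rule we_app[OF x y])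
  finally show ?thesis .
qed

lemma conj_rel: "rng n m \<Longrightarrow> TE n A B \<Longrightarrow> TE n ([rl m] @ A @ [rl m]) A' \<Longrightarrow> TE n ([rl m] @ B @ [rl m]) B'
  \<Longrightarrow> TE n A' B'"
proof -
  assume m: "rng n m" and ab: "TE n A B" and a: "TE n ([rl m] @ A @ [rl m]) A'" and b: "TE n ([rl m] @ B @ [rl m]) B'"
  have "TE n A' ([rl m] @ A @ [rl m])" using a by (rule we_sym)
  also have "TE n ... ([rl m] @ B @ [rl m])" by (rule tctx[OF ab])
  also have "TE n ... B'" by (rule b)
  finally show ?thesis .
qed

definition Qc :: "nat \<Rightarrow> nat \<Rightarrow> nat \<Rightarrow> nat \<Rightarrow> nat \<Rightarrow> bool" where
  "Qc n a b c d \<longleftrightarrow> TE n (lam_word a b @ lam_word c d) (lam_word c d @ lam_word a b)"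
definition Qt :: "nat \<Rightarrow> nat \<Rightarrow> nat \<Rightarrow> nat \<Rightarrow> bool" where
  "Qt n k i j \<longleftrightarrow> TE n (lam_word k i @ lam_word k j @ lam_word i j) (lam_word i j @ lam_word k j @ lam_word k i)"

lemma Qc_inv:
  assumes v: "vr n a" "vr n b" "vr n c" "vr n d" "distinct [a,b,c,d]" and m: "rng n m" and q: "Qc n a b c d"
  shows "Qc n (sw m a) (sw m b) (sw m c) (sw m d)"
proof -
  have l1: "TE n ([rl m] @ lam_word a b @ [rl m]) (lam_word (sw m a) (sw m b))"
    using v m by (intro conj_lam) (auto simp: vr_def)
  have l2: "TE n ([rl m] @ lam_word c d @ [rl m]) (lam_word (sw m c) (sw m d))"
    using v m by (intro conj_lam) (auto simp: vr_def)
  show ?thesis unfolding Qc_def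
    using conj_rel[OF m q[unfolded Qc_def] conj2[OF m l1 l2] conj2[OF m l2 l1]] .
qed

lemma Qt_inv:
  assumes v: "vr n k" "vr n i" "vr n j" "distinct [k,i,j]" and m: "rng n m" and q: "Qt n k i j"
  shows "Qt n (sw m k) (sw m i) (sw m j)"
proof -
  have l1: "TE n ([rl m] @ lam_word k i @ [rl m]) (lam_word (sw m k) (sw m i))"
    using v m by (intro conj_lam) (auto simp: vr_def)
  have l2: "TE n ([rl m] @ lam_word k j @ [rl m]) (lam_word (sw m k) (sw m j))"
    using v m by (intro conj_lam) (auto simp: vr_def)
  have l3: "TE n ([rl m] @ lam_word i j @ [rl m]) (lam_word (sw m i) (sw m j))"
    using v m by (intro conj_lam) (auto simp: vr_def)
  show ?thesis unfolding Qt_def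
    using conj_rel[OF m q[unfolded Qt_def] conj2[OF m l1 conj2[OF m l2 l3]] conj2[OF m l3 conj2[OF m l2 l1]]] .
qed

lemma msr1: "distinct [a,b,c,d] \<Longrightarrow> a = Suc m \<Longrightarrow> 4 * sw m a + 3 * sw m b + 2 * sw m c + sw m d < 4 * a + 3 * b + 2 * c + d"
  by (simp add: sw_def)
lemma msr2: "distinct [a,b,c,d] \<Longrightarrow> b = Suc m \<Longrightarrow> a \<noteq> m \<Longrightarrow> 4 * sw m a + 3 * sw m b + 2 * sw m c + sw m d < 4 * a + 3 * b + 2 * c + d"
  by (simp add: sw_def)
lemma msr3: "distinct [a,b,c,d] \<Longrightarrow> c = Suc m \<Longrightarrow> a \<noteq> m \<Longrightarrow> b \<noteq> m \<Longrightarrow> 4 * sw m a + 3 * sw m b + 2 * sw m c + sw m d < 4 * a + 3 * b + 2 * c + d"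
  by (simp add: sw_def)
lemma msr4: "distinct [a,b,c,d] \<Longrightarrow> d = Suc m \<Longrightarrow> a \<noteq> m \<Longrightarrow> b \<noteq> m \<Longrightarrow> c \<noteq> m \<Longrightarrow> 4 * sw m a + 3 * sw m b + 2 * sw m c + sw m d < 4 * a + 3 * b + 2 * c + d"
  by (simp add: sw_def)

lemma sort4:
  assumes base: "4 \<le> n \<Longrightarrow> Q 1 2 3 4"
  and inv: "\<And>a b c d m. vr n a \<Longrightarrow> vr n b \<Longrightarrow> vr n c \<Longrightarrow> vr n d \<Longrightarrow> distinct [a,b,c,d] \<Longrightarrow> rng n m
     \<Longrightarrow> Q a b c d \<Longrightarrow> Q (sw m a) (sw m b) (sw m c) (sw m d)"
  shows "vr n a \<Longrightarrow> vr n b \<Longrightarrow> vr n c \<Longrightarrow> vr n d \<Longrightarrow> distinct [a,b,c,d] \<Longrightarrow> Q a b c d"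
proof (induction "4 * a + 3 * b + 2 * c + d" arbitrary: a b c d rule: less_induct)
  case less
  have step: "Q a b c d" if m: "rng n m" and lt: "4 * sw m a + 3 * sw m b + 2 * sw m c + sw m d < 4 * a + 3 * b + 2 * c + d" for m
  proof -
    have v': "vr n (sw m a)" "vr n (sw m b)" "vr n (sw m c)" "vr n (sw m d)" "distinct [sw m a, sw m b, sw m c, sw m d]"
      using less.prems m by (auto intro: sw_vr)
    have "Q (sw m a) (sw m b) (sw m c) (sw m d)" using less.hyps[OF lt v'] .
    from inv[OF v' m this] show ?thesis by simp
  qed
  consider "a \<noteq> 1" | "a = 1" "b \<noteq> 2" | "a = 1" "b = 2" "c \<noteq> 3" | "a = 1" "b = 2" "c = 3" "d \<noteq> 4"
    | "a = 1" "b = 2" "c = 3" "d = 4" by blast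
  then show ?case
  proof cases
    case 1
    have e: "a = Suc (a - 1)" "rng n (a - 1)" using 1 less.prems by (auto simp: vr_def rng_def)
    show ?thesis by (rule step[OF e(2) msr1[OF less.prems(5) e(1)]])
  next
    case 2
    have e: "b = Suc (b - 1)" "rng n (b - 1)" "a \<noteq> b - 1" using 2 less.prems by (auto simp: vr_def rng_def)
    show ?thesis by (rule step[OF e(2) msr2[OF less.prems(5) e(1) e(3)]])
  next
    case 3
    have e: "c = Suc (c - 1)" "rng n (c - 1)" "a \<noteq> c - 1" "b \<noteq> c - 1" using 3 less.prems by (auto simp: vr_def rng_def)
    show ?thesis by (rule step[OF e(2) msr3[OF less.prems(5) e(1) e(3) e(4)]])
  next
    case 4
    have e: "d = Suc (d - 1)" "rng n (d - 1)" "a \<noteq> d - 1" "b \<noteq> d - 1" "c \<noteq> d - 1" using 4 less.prems by (auto simp: vr_def rng_def)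
    show ?thesis by (rule step[OF e(2) msr4[OF less.prems(5) e(1) e(3) e(4) e(5)]])
  next
    case 5
    then show ?thesis using less.prems base by (auto simp: vr_def)
  qed
qed

lemma sort3:
  assumes base: "3 \<le> n \<Longrightarrow> Q 1 2 3"
  and inv: "\<And>a b c m. vr n a \<Longrightarrow> vr n b \<Longrightarrow> vr n c \<Longrightarrow> distinct [a,b,c] \<Longrightarrow> rng n m
     \<Longrightarrow> Q a b c \<Longrightarrow> Q (sw m a) (sw m b) (sw m c)"
  shows "vr n a \<Longrightarrow> vr n b \<Longrightarrow> vr n c \<Longrightarrow> distinct [a,b,c] \<Longrightarrow> Q a b c"
proof (induction "3 * a + 2 * b + c" arbitrary: a b c rule: less_induct)
  case less
  have step: "Q a b c" if m: "rng n m" and lt: "3 * sw m a + 2 * sw m b + sw m c < 3 * a + 2 * b + c" for m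
  proof -
    have v': "vr n (sw m a)" "vr n (sw m b)" "vr n (sw m c)" "distinct [sw m a, sw m b, sw m c]"
      using less.prems m by (auto intro: sw_vr)
    have "Q (sw m a) (sw m b) (sw m c)" using less.hyps[OF lt v'] .
    from inv[OF v' m this] show ?thesis by simp
  qed
  consider "a \<noteq> 1" | "a = 1" "b \<noteq> 2" | "a = 1" "b = 2" "c \<noteq> 3" | "a = 1" "b = 2" "c = 3" by blast
  then show ?case
  proof cases
    case 1
    then show ?thesis using less.prems by (intro step[of "a - 1"]) (auto simp: rng_def vr_def sw_def)
  next
    case 2
    then show ?thesis using less.prems by (intro step[of "b - 1"]) (auto simp: rng_def vr_def sw_def)
  next
    case 3
    then show ?thesis using less.prems by (intro step[of "c - 1"]) (auto simp: rng_def vr_def sw_def)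
  next
    case 4
    then show ?thesis using less.prems base by (auto simp: vr_def)
  qed
qed

lemma lw12: "lam_word 1 2 = [rl 1, ti 1]" by (simp add: lam_word_def lam_up_def rhos_def)
lemma lw34: "lam_word 3 4 = [rl 3, ti 3]" by (simp add: lam_word_def lam_up_def rhos_def)
lemma lw23: "lam_word 2 3 = [rl 2, ti 2]" by (simp add: lam_word_def lam_up_def rhos_def)
lemma lw13: "lam_word 1 3 = [rl 2, rl 1, ti 1, rl 2]" by (simp add: lam_word_def lam_up_def rhos_def eval_nat_numeral upt_rec)

lemma Qc_base: "4 \<le> n \<Longrightarrow> Qc n 1 2 3 4"
proof -
  assume h: "4 \<le> n"
  have "TE n [rl 1, ti 1, rl 3, ti 3] [rl 1, rl 3, ti 1, ti 3]"
    using tctx[OF rel_trfar[of 1 n 3], of "[rl 1]" "[ti 3]"] h by (simp add: eval_nat_numeral)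
  also have "TE n ... [rl 3, rl 1, ti 1, ti 3]"
    using tctx[OF rel_rfar[of 1 n 3], of "[]" "[ti 1, ti 3]"] h by (simp add: eval_nat_numeral)
  also have "TE n ... [rl 3, rl 1, ti 3, ti 1]"
    using tctx[OF rel_ttfar[of 1 n 3], of "[rl 3, rl 1]" "[]"] h by (simp add: eval_nat_numeral)
  also have "TE n ... [rl 3, ti 3, rl 1, ti 1]"
    using tctx[OF we_sym[OF rel_trfar[of 3 n 1]], of "[rl 3]" "[ti 1]"] h by (simp add: eval_nat_numeral)
  finally show ?thesis unfolding Qc_def lw12 lw34 by simp
qed

lemma rel_M2: "1 \<le> i \<Longrightarrow> i \<le> n - 2 \<Longrightarrow> TE n [ti (i+1), rl i, rl (i+1)] [rl i, rl (i+1), ti i]"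
proof -
  assume h: "1 \<le> i" "i \<le> n - 2"
  have "TE n [rl i, rl (i+1), ti i] [rl i, rl (i+1), ti i, rl (i+1), rl (i+1)]"
    using tctx[OF we_sym[OF rel_rr[of "i+1" n]], of "[rl i, rl (i+1), ti i]" "[]"] h by simp
  also have "TE n ... [rl i, rl (i+1), ti i, rl (i+1), rl i, rl i, rl (i+1)]"
    using tctx[OF we_sym[OF rel_rr[of i n]], of "[rl i, rl (i+1), ti i, rl (i+1)]" "[rl (i+1)]"] h by simp
  also have "TE n ... [rl i, rl (i+1), rl (i+1), rl i, ti (i+1), rl i, rl (i+1)]"
    using tctx[OF rel_M[of i n], of "[rl i, rl (i+1)]" "[rl i, rl (i+1)]"] h by (simp add: eval_nat_numeral)
  also have "TE n ... [rl i, rl i, ti (i+1), rl i, rl (i+1)]"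
    using tctx[OF rel_rr[of "i+1" n], of "[rl i]" "[rl i, ti (i+1), rl i, rl (i+1)]"] h by (simp add: eval_nat_numeral)
  also have "TE n ... [ti (i+1), rl i, rl (i+1)]"
    using tctx[OF rel_rr[of i n], of "[]" "[ti (i+1), rl i, rl (i+1)]"] h by (simp add: eval_nat_numeral)
  finally show ?thesis by (rule we_sym)
qed

lemma Qt_base: "3 \<le> n \<Longrightarrow> Qt n 1 2 3"
proof -
  assume h: "3 \<le> n"
  have "TE n [rl 1, ti 1, rl 2, rl 1, ti 1, rl 2, rl 2, ti 2] [rl 1, ti 1, rl 2, rl 1, ti 1, ti 2]"
    using tctx[OF rel_rr[of 2 n], of "[rl 1, ti 1, rl 2, rl 1, ti 1]" "[ti 2]"] h by (simp add: eval_nat_numeral)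
  also have "TE n ... [rl 1, rl 2, rl 1, ti 2, ti 1, ti 2]"
    using tctx[OF rel_M[of 1 n], of "[rl 1]" "[ti 1, ti 2]"] h by (simp add: eval_nat_numeral)
  finally have L: "TE n [rl 1, ti 1, rl 2, rl 1, ti 1, rl 2, rl 2, ti 2] [rl 1, rl 2, rl 1, ti 2, ti 1, ti 2]" .
  have "TE n [rl 2, ti 2, rl 2, rl 1, ti 1, rl 2, rl 1, ti 1] [rl 2, ti 2, rl 2, rl 1, rl 2, rl 1, ti 2, ti 1]"
    using tctx[OF rel_M[of 1 n], of "[rl 2, ti 2, rl 2, rl 1]" "[ti 1]"] h by (simp add: eval_nat_numeral)
  also have "TE n ... [rl 2, ti 2, rl 1, rl 2, rl 1, rl 1, ti 2, ti 1]"
    using tctx[OF we_sym[OF rel_rbraid[of 1 n]], of "[rl 2, ti 2]" "[rl 1, ti 2, ti 1]"] h by (simp add: eval_nat_numeral)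
  also have "TE n ... [rl 2, ti 2, rl 1, rl 2, ti 2, ti 1]"
    using tctx[OF rel_rr[of 1 n], of "[rl 2, ti 2, rl 1, rl 2]" "[ti 2, ti 1]"] h by (simp add: eval_nat_numeral)
  also have "TE n ... [rl 2, rl 1, rl 2, ti 1, ti 2, ti 1]"
    using tctx[OF rel_M2[of 1 n], of "[rl 2]" "[ti 2, ti 1]"] h by (simp add: eval_nat_numeral)
  also have "TE n ... [rl 1, rl 2, rl 1, ti 1, ti 2, ti 1]"
    using tctx[OF we_sym[OF rel_rbraid[of 1 n]], of "[]" "[ti 1, ti 2, ti 1]"] h by (simp add: eval_nat_numeral)
  also have "TE n ... [rl 1, rl 2, rl 1, ti 2, ti 1, ti 2]"
    using tctx[OF rel_tbraid[of 1 n], of "[rl 1, rl 2, rl 1]" "[]"] h by (simp add: eval_nat_numeral)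
  finally have R: "TE n [rl 2, ti 2, rl 2, rl 1, ti 1, rl 2, rl 1, ti 1] [rl 1, rl 2, rl 1, ti 2, ti 1, ti 2]" .
  show ?thesis unfolding Qt_def lw12 lw13 lw23 using we_trans[OF L we_sym[OF R]] by simp
qed

lemma Qc_all: "vr n a \<Longrightarrow> vr n b \<Longrightarrow> vr n c \<Longrightarrow> vr n d \<Longrightarrow> distinct [a,b,c,d] \<Longrightarrow> Qc n a b c d"
  by (rule sort4[where Q="Qc n", OF Qc_base Qc_inv])

lemma Qt_all: "vr n a \<Longrightarrow> vr n b \<Longrightarrow> vr n c \<Longrightarrow> distinct [a,b,c] \<Longrightarrow> Qt n a b c"
  by (rule sort3[where Q="Qt n", OF Qt_base Qt_inv])


fun lw :: "(nat \<times> nat) \<times> bool \<Rightarrow> tvb_gen word" where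
  "lw ((k, l), True) = lam_word k l"
| "lw ((k, l), False) = winv (lam_word k l)"

definition subst :: "(nat \<times> nat) word \<Rightarrow> tvb_gen word" where
  "subst w = concat (map lw w)"

lemma subst_Nil[simp]: "subst [] = []" by (simp add: subst_def)
lemma subst_Cons[simp]: "subst (x # w) = lw x @ subst w" by (simp add: subst_def)
lemma subst_append[simp]: "subst (u @ v) = subst u @ subst v" by (simp add: subst_def)

lemma lw_cancel: "TE n (lw (x, b) @ lw (x, \<not> b)) []"
proof -
  obtain k l where x: "x = (k, l)" by (cases x)
  show ?thesis
  proof (cases b)
    case True then show ?thesis using x we_inv_r[of "tvb_rels n" "lam_word k l"] by simp
  next
    case False then show ?thesis using x we_inv_l[of "tvb_rels n" "lam_word k l"] by simp
  qed
qed

lemma vp_rel_TE: "(l, r) \<in> vp_rels n \<Longrightarrow> TE n (subst l) (subst r)"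
proof -
  assume "(l, r) \<in> vp_rels n"
  then consider (c) i j k m where "l = gw (i, j) @ gw (k, m)" "r = gw (k, m) @ gw (i, j)"
      "i \<in> {1..n}" "j \<in> {1..n}" "k \<in> {1..n}" "m \<in> {1..n}" "distinct [i, j, k, m]"
    | (t) i j k where "l = gw (k, i) @ gw (k, j) @ gw (i, j)" "r = gw (i, j) @ gw (k, j) @ gw (k, i)"
      "i \<in> {1..n}" "j \<in> {1..n}" "k \<in> {1..n}" "distinct [i, j, k]"
    unfolding vp_rels_def by blast
  then show ?thesis
  proof cases
    case c
    have "Qc n i j k m" using c by (intro Qc_all) (auto simp: vr_def)
    then show ?thesis using c by (simp add: Qc_def gw_def)
  next
    case t
    have "Qt n k i j" using t by (intro Qt_all) (auto simp: vr_def)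
    then show ?thesis using t by (simp add: Qt_def gw_def)
  qed
qed

lemma subst_wd: "word_eq (vp_rels n) u v \<Longrightarrow> TE n (subst u) (subst v)"
proof (induction rule: word_eq.induct)
  case (refl w) show ?case by (rule we_refl)
next
  case (sym u v) then show ?case by (blast intro: we_sym)
next
  case (trans u v w) then show ?case by (blast intro: we_trans)
next
  case (cancel u a b v)
  have "TE n (subst u @ (lw (a, b) @ lw (a, \<not> b)) @ subst v) (subst u @ [] @ subst v)"
    by (rule tctx[OF lw_cancel])
  then show ?case by simp
next
  case (rel l r u v)
  have "TE n (subst u @ subst l @ subst v) (subst u @ subst r @ subst v)"
    by (rule tctx[OF vp_rel_TE[OF rel]])
  then show ?case by simp
qed


type_synonym st = "nat set \<times> (nat \<Rightarrow> nat) \<times> (nat \<times> nat) word"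

abbreviation "VE n \<equiv> word_eq (vp_rels n)"

definition vb :: "nat \<Rightarrow> (nat \<Rightarrow> nat) \<Rightarrow> bool" where "vb n p \<longleftrightarrow> bij_betw p {1..n} {1..n}"
definition tog :: "nat \<Rightarrow> nat set \<Rightarrow> nat set" where "tog x E = (if x \<in> E then E - {x} else insert x E)"
definition cw :: "nat set \<Rightarrow> nat \<Rightarrow> nat \<Rightarrow> (nat \<times> nat) word" where
  "cw E a b = (if a \<in> E \<and> b \<in> E then [((b, a), True)] else if a \<notin> E \<and> b \<notin> E then [((a, b), True)] else [])"

fun la :: "nat \<Rightarrow> tvb_gen \<times> bool \<Rightarrow> st \<Rightarrow> st" where
  "la n (S i, b) (E, p, w) = (if vb n p \<and> rng n i then
      (E, p \<circ> sw i, w @ (if b then winv (cw E (p i) (p (Suc i))) else cw E (p (Suc i)) (p i))) else (E, p, w))"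
| "la n (Rh i, b) (E, p, w) = (if vb n p \<and> rng n i then (E, p \<circ> sw i, w) else (E, p, w))"
| "la n (G j, b) (E, p, w) = (if vb n p \<and> vr n j then (tog (p j) E, p, w) else (E, p, w))"

definition act :: "nat \<Rightarrow> tvb_gen word \<Rightarrow> st \<Rightarrow> st" where "act n ws s = fold (la n) ws s"

fun seq :: "nat \<Rightarrow> st \<Rightarrow> st \<Rightarrow> bool" where
  "seq n (E, p, w) (E', p', w') \<longleftrightarrow> E = E' \<and> p = p' \<and> VE n w w'"

lemma seq_refl: "seq n s s" by (cases s) (simp add: we_refl)
lemma seq_sym: "seq n s t \<Longrightarrow> seq n t s"
proof -
  assume h: "seq n s t"
  obtain E p w where s: "s = (E, p, w)" by (cases s)
  obtain E' p' w' where t: "t = (E', p', w')" by (cases t)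
  from h have "E = E'" "p = p'" "VE n w w'" by (simp_all add: s t)
  then show ?thesis by (simp add: s t we_sym)
qed
lemma seq_trans: "seq n s t \<Longrightarrow> seq n t u \<Longrightarrow> seq n s u"
proof -
  assume h: "seq n s t" "seq n t u"
  obtain E p w where s: "s = (E, p, w)" by (cases s)
  obtain E' p' w' where t: "t = (E', p', w')" by (cases t)
  obtain E'' p'' w'' where u: "u = (E'', p'', w'')" by (cases u)
  from h have "E = E'" "p = p'" "VE n w w'" "E' = E''" "p' = p''" "VE n w' w''" by (simp_all add: s t u)
  then show ?thesis by (simp add: s u we_trans[of _ w w' w''])
qed

lemma sw_sw_fun: "p \<circ> sw i \<circ> sw i = p" by (rule ext) simp

lemma sw_bij: "rng n i \<Longrightarrow> bij_betw (sw i) {1..n} {1..n}"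
  by (rule bij_betw_byWitness[where f'="sw i"]) (auto simp: sw_def rng_def)

lemma vb_sw[simp]: "vb n p \<Longrightarrow> rng n i \<Longrightarrow> vb n (p \<circ> sw i)"
  unfolding vb_def by (rule bij_betw_trans[OF sw_bij])

lemma vb_vr: "vb n p \<Longrightarrow> vr n x \<Longrightarrow> vr n (p x)"
  unfolding vb_def vr_def using bij_betw_apply[of p "{1..n}" "{1..n}" x] by simp
lemma vb_inj: "vb n p \<Longrightarrow> vr n x \<Longrightarrow> vr n y \<Longrightarrow> p x = p y \<longleftrightarrow> x = y"
  unfolding vb_def vr_def using inj_on_eq_iff[OF bij_betw_imp_inj_on[of p "{1..n}" "{1..n}"], of x y] by simp

lemma la_inv: "\<not> vb n p \<Longrightarrow> la n x (E, p, w) = (E, p, w)"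
  by (cases x, cases "fst x") auto
lemma act_inv: "\<not> vb n p \<Longrightarrow> act n ws (E, p, w) = (E, p, w)"
  by (induct ws) (auto simp: act_def la_inv)

lemma act_Nil[simp]: "act n [] s = s" by (simp add: act_def)
lemma act_Cons: "act n (x # ws) s = act n ws (la n x s)" by (simp add: act_def)
lemma act_append: "act n (u @ v) s = act n v (act n u s)" by (simp add: act_def)

lemma la_cong: "seq n s t \<Longrightarrow> seq n (la n x s) (la n x t)"
proof -
  assume h: "seq n s t"
  obtain E p w where s: "s = (E, p, w)" by (cases s)
  obtain E' p' w' where t: "t = (E', p', w')" by (cases t)
  have e: "E' = E" "p' = p" "VE n w w'" using h s t by auto
  obtain g b where x: "x = (g, b)" by (cases x)
  have ap: "\<And>c. VE n (w @ c) (w' @ c)" by (rule we_app[OF e(3) we_refl])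
  show ?thesis unfolding s t x e(1,2) by (cases g) (simp_all add: e(3) ap)
qed

lemma act_cong: "seq n s t \<Longrightarrow> seq n (act n ws s) (act n ws t)"
proof (induct ws arbitrary: s t)
  case Nil then show ?case by simp
next
  case (Cons x ws) then show ?case by (simp only: act_Cons) (rule Cons(1)[OF la_cong[OF Cons(2)]])
qed

lemma tog_tog[simp]: "tog x (tog x E) = E" by (auto simp: tog_def)
lemma tog_comm: "tog x (tog y E) = tog y (tog x E)" by (auto simp: tog_def)
lemma cw_tog_other: "x \<noteq> a \<Longrightarrow> x \<noteq> b \<Longrightarrow> cw (tog x E) a b = cw E a b"
  by (auto simp: cw_def tog_def)
lemma cw_tog2: "a \<noteq> b \<Longrightarrow> cw (tog a (tog b E)) a b = cw E b a"
  by (auto simp: cw_def tog_def)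

lemma vp_comm_rel: "vr n i \<Longrightarrow> vr n j \<Longrightarrow> vr n k \<Longrightarrow> vr n l \<Longrightarrow> distinct [i, j, k, l] \<Longrightarrow>
  VE n [((i, j), True), ((k, l), True)] [((k, l), True), ((i, j), True)]"
  by (rule we_rel) (auto simp: vp_rels_def gw_def vr_def)
lemma vp_tri_rel: "vr n i \<Longrightarrow> vr n j \<Longrightarrow> vr n k \<Longrightarrow> distinct [i, j, k] \<Longrightarrow>
  VE n [((k, i), True), ((k, j), True), ((i, j), True)] [((i, j), True), ((k, j), True), ((k, i), True)]"
  by (rule we_rel) (auto simp: vp_rels_def gw_def vr_def)

lemma vp_comm_cw: "vr n a \<Longrightarrow> vr n b \<Longrightarrow> vr n c \<Longrightarrow> vr n d \<Longrightarrow> distinct [a, b, c, d] \<Longrightarrow>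
  VE n (winv (cw E a b) @ winv (cw E c d)) (winv (cw E c d) @ winv (cw E a b))"
proof -
  assume h: "vr n a" "vr n b" "vr n c" "vr n d" "distinct [a, b, c, d]"
  have c1: "VE n [((c,d),True), ((a,b),True)] [((a,b),True), ((c,d),True)]"
    using vp_comm_rel[of n c d a b] h by auto
  have c2: "VE n [((d,c),True), ((a,b),True)] [((a,b),True), ((d,c),True)]"
    using vp_comm_rel[of n d c a b] h by auto
  have c3: "VE n [((c,d),True), ((b,a),True)] [((b,a),True), ((c,d),True)]"
    using vp_comm_rel[of n c d b a] h by auto
  have c4: "VE n [((d,c),True), ((b,a),True)] [((b,a),True), ((d,c),True)]"
    using vp_comm_rel[of n d c b a] h by auto
  have g: "VE n (cw E c d @ cw E a b) (cw E a b @ cw E c d)"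
    by (cases "a \<in> E"; cases "b \<in> E"; cases "c \<in> E"; cases "d \<in> E")
      (simp_all add: cw_def we_refl, (rule c1 c2 c3 c4)+)
  have "VE n (winv (cw E c d @ cw E a b)) (winv (cw E a b @ cw E c d))"
    by (rule we_winv[OF g])
  then show ?thesis by simp
qed

lemma vp_tri_cw: "vr n a \<Longrightarrow> vr n b \<Longrightarrow> vr n c \<Longrightarrow> distinct [a, b, c] \<Longrightarrow>
  VE n (winv (cw E a b) @ winv (cw E a c) @ winv (cw E b c)) (winv (cw E b c) @ winv (cw E a c) @ winv (cw E a b))"
proof -
  assume h: "vr n a" "vr n b" "vr n c" "distinct [a, b, c]"
  have g: "VE n (cw E a b @ cw E a c @ cw E b c) (cw E b c @ cw E a c @ cw E a b)"
  proof (cases "a \<in> E \<and> b \<in> E \<and> c \<in> E")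
    case True
    have "VE n [((b, a), True), ((c, a), True), ((c, b), True)] [((c, b), True), ((c, a), True), ((b, a), True)]"
      using we_sym[OF vp_tri_rel[of n b a c]] h by auto
    then show ?thesis using True by (simp add: cw_def)
  next
    case F1: False
    show ?thesis
    proof (cases "a \<notin> E \<and> b \<notin> E \<and> c \<notin> E")
      case True
      have "VE n [((a, b), True), ((a, c), True), ((b, c), True)] [((b, c), True), ((a, c), True), ((a, b), True)]"
        using vp_tri_rel[of n b c a] h by auto
      then show ?thesis using True by (simp add: cw_def)
    next
      case False
      then have "cw E a b @ cw E a c @ cw E b c = cw E b c @ cw E a c @ cw E a b"
        using F1 by (auto simp: cw_def)
      then show ?thesis by (simp add: we_refl)
    qed
  qed
  have "VE n (winv (cw E b c @ cw E a c @ cw E a b)) (winv (cw E a b @ cw E a c @ cw E b c))"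
    by (rule we_sym[OF we_winv[OF g]])
  then show ?thesis by simp
qed


lemma sw1[simp]: "sw m m = Suc m" by (simp add: sw_def)
lemma sw2[simp]: "sw m (Suc m) = m" by (simp add: sw_def)
lemma sw3[simp]: "x \<noteq> m \<Longrightarrow> x \<noteq> Suc m \<Longrightarrow> sw m x = x" by (simp add: sw_def)

lemma F1: "p \<circ> sw i \<circ> sw (Suc i) \<circ> sw i = p \<circ> sw (Suc i) \<circ> sw i \<circ> sw (Suc i)"
  by (rule ext) (simp add: sw_def)
lemma F2: "i + 2 \<le> j \<or> j + 2 \<le> i \<Longrightarrow> p \<circ> sw i \<circ> sw j = p \<circ> sw j \<circ> sw i"
  by (rule ext) (auto simp: sw_def)
lemma sw_sw2[simp]: "p \<circ> sw i \<circ> sw i = p" by (rule sw_sw_fun)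

lemma VE_pre: "VE n A1 B1 \<Longrightarrow> VE n (w @ A1) (w @ B1)"
  by (rule we_app[OF we_refl])

lemma seqI: "E = E' \<Longrightarrow> p = p' \<Longrightarrow> VE n w w' \<Longrightarrow> seq n (E, p, w) (E', p', w')" by simp

lemma val_facts: "vb n p \<Longrightarrow> rng n i \<Longrightarrow> vr n (p i) \<and> vr n (p (Suc i)) \<and> p i \<noteq> p (Suc i)"
proof -
  assume h: "vb n p" "rng n i"
  then have v: "vr n i" "vr n (Suc i)" by (auto simp: rng_def vr_def)
  show ?thesis using vb_vr[OF h(1) v(1)] vb_vr[OF h(1) v(2)] vb_inj[OF h(1) v] by simp
qed

lemmas la_simps = la.simps act_Cons

lemma R_inv: "\<not> vb n p \<Longrightarrow> seq n (act n L (E, p, w)) (act n R (E, p, w))"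
  by (simp add: act_inv seq_refl)

lemma R1: assumes "1 \<le> i" "i \<le> n - 2"
  shows "seq n (act n [(S i, True), (S (Suc i), True), (S i, True)] s) (act n [(S (Suc i), True), (S i, True), (S (Suc i), True)] s)"
proof -
  obtain E p w where s: "s = (E, p, w)" by (cases s)
  show ?thesis
  proof (cases "vb n p")
    case False then show ?thesis by (simp add: s R_inv)
  next
    case True
    have r: "rng n i" "rng n (Suc i)" using assms by (auto simp: rng_def)
    let ?a = "p i" and ?b = "p (Suc i)" and ?c = "p (Suc (Suc i))"
    have v: "vr n ?a" "vr n ?b" "vr n ?c" "distinct [?a, ?b, ?c]"
      using val_facts[OF True r(1)] val_facts[OF True r(2)] vb_inj[OF True, of i "Suc (Suc i)"] assms
      by (auto simp: vr_def)
    have L: "act n [(S i, True), (S (Suc i), True), (S i, True)] s =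
       (E, p \<circ> sw i \<circ> sw (Suc i) \<circ> sw i, w @ winv (cw E ?a ?b) @ winv (cw E ?a ?c) @ winv (cw E ?b ?c))"
      using True r by (simp add: s la_simps)
    have R: "act n [(S (Suc i), True), (S i, True), (S (Suc i), True)] s =
       (E, p \<circ> sw (Suc i) \<circ> sw i \<circ> sw (Suc i), w @ winv (cw E ?b ?c) @ winv (cw E ?a ?c) @ winv (cw E ?a ?b))"
      using True r by (simp add: s la_simps)
    show ?thesis unfolding L R by (rule seqI[OF HOL.refl F1 VE_pre[OF vp_tri_cw[OF v]]])
  qed
qed

lemma R2: assumes "1 \<le> i" "i \<le> n - 1" "1 \<le> j" "j \<le> n - 1" "i + 2 \<le> j \<or> j + 2 \<le> i"
  shows "seq n (act n [(S i, True), (S j, True)] s) (act n [(S j, True), (S i, True)] s)"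
proof -
  obtain E p w where s: "s = (E, p, w)" by (cases s)
  show ?thesis
  proof (cases "vb n p")
    case False then show ?thesis by (simp add: s R_inv)
  next
    case True
    have r: "rng n i" "rng n j" using assms by (auto simp: rng_def)
    have ne: "j \<noteq> i" "j \<noteq> Suc i" "Suc j \<noteq> i" "Suc j \<noteq> Suc i" "i \<noteq> j" "i \<noteq> Suc j" "Suc i \<noteq> j" using assms by auto
    have v: "vr n (p i)" "vr n (p (Suc i))" "vr n (p j)" "vr n (p (Suc j))" "distinct [p i, p (Suc i), p j, p (Suc j)]"
      using val_facts[OF True r(1)] val_facts[OF True r(2)] vb_inj[OF True, of i j] vb_inj[OF True, of i "Suc j"]
        vb_inj[OF True, of "Suc i" j] vb_inj[OF True, of "Suc i" "Suc j"] assms ne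
      by (auto simp: vr_def)
    have L: "act n [(S i, True), (S j, True)] s =
       (E, p \<circ> sw i \<circ> sw j, w @ winv (cw E (p i) (p (Suc i))) @ winv (cw E (p j) (p (Suc j))))"
      using True r ne by (simp add: s la_simps)
    have R: "act n [(S j, True), (S i, True)] s =
       (E, p \<circ> sw j \<circ> sw i, w @ winv (cw E (p j) (p (Suc j))) @ winv (cw E (p i) (p (Suc i))))"
      using True r ne by (simp add: s la_simps)
    show ?thesis unfolding L R by (rule seqI[OF HOL.refl F2[OF assms(5)] VE_pre[OF vp_comm_cw[OF v]]])
  qed
qed

lemma R3: assumes "1 \<le> i" "i \<le> n - 1"
  shows "seq n (act n [(Rh i, True), (Rh i, True)] s) (act n [] s)"
proof -
  obtain E p w where s: "s = (E, p, w)" by (cases s)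
  have r: "rng n i" using assms by (auto simp: rng_def)
  show ?thesis using r by (cases "vb n p") (simp_all add: s la_simps seq_refl we_refl act_def)
qed

lemma R4: assumes "1 \<le> i" "i \<le> n - 1" "1 \<le> j" "j \<le> n - 1" "i + 2 \<le> j \<or> j + 2 \<le> i"
  shows "seq n (act n [(Rh i, True), (Rh j, True)] s) (act n [(Rh j, True), (Rh i, True)] s)"
proof -
  obtain E p w where s: "s = (E, p, w)" by (cases s)
  have r: "rng n i" "rng n j" using assms by (auto simp: rng_def)
  show ?thesis using r F2[OF assms(5), of p] by (cases "vb n p") (simp_all add: s la_simps seq_refl we_refl)
qed

lemma R5: assumes "1 \<le> i" "i \<le> n - 2"
  shows "seq n (act n [(Rh i, True), (Rh (Suc i), True), (Rh i, True)] s) (act n [(Rh (Suc i), True), (Rh i, True), (Rh (Suc i), True)] s)"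
proof -
  obtain E p w where s: "s = (E, p, w)" by (cases s)
  have r: "rng n i" "rng n (Suc i)" using assms by (auto simp: rng_def)
  show ?thesis using r F1[of p i] by (cases "vb n p") (simp_all add: s la_simps seq_refl we_refl)
qed

lemma R6: assumes "1 \<le> i" "i \<le> n - 1" "1 \<le> j" "j \<le> n - 1" "i + 2 \<le> j \<or> j + 2 \<le> i"
  shows "seq n (act n [(S i, True), (Rh j, True)] s) (act n [(Rh j, True), (S i, True)] s)"
proof -
  obtain E p w where s: "s = (E, p, w)" by (cases s)
  have r: "rng n i" "rng n j" using assms by (auto simp: rng_def)
  have ne: "i \<noteq> j" "i \<noteq> Suc j" "Suc i \<noteq> j" "Suc i \<noteq> Suc j" using assms by auto
  show ?thesis using r ne F2[OF assms(5), of p] by (cases "vb n p") (simp_all add: s la_simps seq_refl we_refl)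
qed

lemma R7: assumes "1 \<le> i" "i \<le> n - 2"
  shows "seq n (act n [(Rh i, True), (Rh (Suc i), True), (S i, True)] s) (act n [(S (Suc i), True), (Rh i, True), (Rh (Suc i), True)] s)"
proof -
  obtain E p w where s: "s = (E, p, w)" by (cases s)
  have r: "rng n i" "rng n (Suc i)" using assms by (auto simp: rng_def)
  show ?thesis using r F1[of p i] by (cases "vb n p") (simp_all add: s la_simps seq_refl we_refl)
qed

lemma R8: assumes "1 \<le> i" "i \<le> n"
  shows "seq n (act n [(G i, True), (G i, True)] s) (act n [] s)"
proof -
  obtain E p w where s: "s = (E, p, w)" by (cases s)
  have r: "vr n i" using assms by (auto simp: vr_def)
  show ?thesis using r by (cases "vb n p") (simp_all add: s la_simps seq_refl we_refl act_def)
qed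

lemma R9: assumes "1 \<le> i" "i \<le> n" "1 \<le> j" "j \<le> n"
  shows "seq n (act n [(G i, True), (G j, True)] s) (act n [(G j, True), (G i, True)] s)"
proof -
  obtain E p w where s: "s = (E, p, w)" by (cases s)
  have r: "vr n i" "vr n j" using assms by (auto simp: vr_def)
  show ?thesis using r tog_comm[of "p i" "p j" E] by (cases "vb n p") (simp_all add: s la_simps seq_refl we_refl)
qed

lemma R10: assumes "1 \<le> i" "i \<le> n - 1" "1 \<le> j" "j \<le> n" "j \<noteq> i" "j \<noteq> i + 1"
  shows "seq n (act n [(G j, True), (Rh i, True)] s) (act n [(Rh i, True), (G j, True)] s)"
proof -
  obtain E p w where s: "s = (E, p, w)" by (cases s)
  have r: "rng n i" "vr n j" using assms by (auto simp: rng_def vr_def)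
  show ?thesis using r assms by (cases "vb n p") (simp_all add: s la_simps seq_refl we_refl)
qed

lemma R11: assumes "1 \<le> i" "i \<le> n - 1" "1 \<le> j" "j \<le> n" "j \<noteq> i" "j \<noteq> i + 1"
  shows "seq n (act n [(G j, True), (S i, True)] s) (act n [(S i, True), (G j, True)] s)"
proof -
  obtain E p w where s: "s = (E, p, w)" by (cases s)
  have r: "rng n i" "vr n j" using assms by (auto simp: rng_def vr_def)
  show ?thesis
  proof (cases "vb n p")
    case False then show ?thesis by (simp add: s R_inv)
  next
    case True
    have ne: "p j \<noteq> p i" "p j \<noteq> p (Suc i)"
      using vb_inj[OF True, of j i] vb_inj[OF True, of j "Suc i"] assms by (auto simp: vr_def)
    show ?thesis using r True assms by (simp add: s la_simps seq_refl we_refl cw_tog_other[OF ne])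
  qed
qed

lemma R12: assumes "1 \<le> i" "i \<le> n - 1"
  shows "seq n (act n [(Rh i, True), (G i, True)] s) (act n [(G (Suc i), True), (Rh i, True)] s)"
proof -
  obtain E p w where s: "s = (E, p, w)" by (cases s)
  have r: "rng n i" "vr n i" "vr n (Suc i)" using assms by (auto simp: rng_def vr_def)
  show ?thesis using r by (cases "vb n p") (simp_all add: s la_simps seq_refl we_refl)
qed

lemma R13: assumes "1 \<le> i" "i \<le> n - 1"
  shows "seq n (act n [(Rh i, True), (S i, True), (Rh i, True)] s)
     (act n [(G (Suc i), True), (G i, True), (S i, True), (G i, True), (G (Suc i), True)] s)"
proof -
  obtain E p w where s: "s = (E, p, w)" by (cases s)
  have r: "rng n i" "vr n i" "vr n (Suc i)" using assms by (auto simp: rng_def vr_def)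
  show ?thesis
  proof (cases "vb n p")
    case False then show ?thesis by (simp add: s R_inv)
  next
    case True
    have ne: "p i \<noteq> p (Suc i)" using val_facts[OF True r(1)] by simp
    have e: "tog (p i) (tog (p (Suc i)) (tog (p i) (tog (p (Suc i)) E))) = E"
      by (metis tog_comm tog_tog)
    have L: "act n [(Rh i, True), (S i, True), (Rh i, True)] s = (E, p \<circ> sw i, w @ winv (cw E (p (Suc i)) (p i)))"
      using True r by (simp add: s la_simps)
    have R: "act n [(G (Suc i), True), (G i, True), (S i, True), (G i, True), (G (Suc i), True)] s
       = (tog (p i) (tog (p (Suc i)) (tog (p i) (tog (p (Suc i)) E))), p \<circ> sw i,
           w @ winv (cw (tog (p i) (tog (p (Suc i)) E)) (p i) (p (Suc i))))"
      using True r by (simp add: s la_simps)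
    show ?thesis unfolding L R e cw_tog2[OF ne] by (simp add: we_refl)
  qed
qed

lemma act_rel: "(l, r) \<in> tvb_rels n \<Longrightarrow> seq n (act n l s) (act n r s)"
  unfolding tvb_rels_def gw_def
  apply (elim UnE)
  apply (auto intro: R1 R2 R3 R4 R5 R6 R7 R8 R9 R10 R11 R12 R13)
  done


lemma act_cancel: "seq n (act n [(g, b), (g, \<not> b)] s) s"
proof -
  obtain E p w where s: "s = (E, p, w)" by (cases s)
  show ?thesis
  proof (cases "vb n p")
    case False then show ?thesis by (simp add: s act_inv seq_refl)
  next
    case True
    show ?thesis
    proof (cases g)
      case (S i)
      show ?thesis
      proof (cases "rng n i")
        case False then show ?thesis using True by (simp add: s S la_simps seq_refl)
      next
        case r: True
        show ?thesis
        proof (cases b)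
          case True
          have "VE n (w @ (winv (cw E (p i) (p (Suc i))) @ cw E (p i) (p (Suc i))) @ []) (w @ [] @ [])"
            by (rule we_ctx[OF we_inv_l])
          then show ?thesis using \<open>vb n p\<close> r True by (simp add: s S la_simps)
        next
          case False
          have "VE n (w @ (cw E (p (Suc i)) (p i) @ winv (cw E (p (Suc i)) (p i))) @ []) (w @ [] @ [])"
            by (rule we_ctx[OF we_inv_r])
          then show ?thesis using \<open>vb n p\<close> r False by (simp add: s S la_simps)
        qed
      qed
    next
      case (Rh i) then show ?thesis using True by (cases "rng n i") (simp_all add: s la_simps seq_refl we_refl)
    next
      case (G j) then show ?thesis using True by (cases "vr n j") (simp_all add: s la_simps seq_refl we_refl)
    qed
  qed
qed

lemma act_wd: "TE n u v \<Longrightarrow> seq n (act n u s) (act n v s)"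
proof (induction arbitrary: s rule: word_eq.induct)
  case (refl w) show ?case by (rule seq_refl)
next
  case (sym u v) then show ?case by (blast intro: seq_sym)
next
  case (trans u v w) then show ?case by (blast intro: seq_trans)
next
  case (cancel u a b v)
  have "seq n (act n v (act n [(a, b), (a, \<not> b)] (act n u s))) (act n v (act n u s))"
    by (rule act_cong[OF act_cancel])
  then show ?case by (simp only: act_append)
next
  case (rel l r u v)
  have "seq n (act n v (act n l (act n u s))) (act n v (act n r (act n u s)))"
    by (rule act_cong[OF act_rel[OF rel]])
  then show ?case by (simp only: act_append)
qed

definition QQ :: "nat list \<Rightarrow> nat \<Rightarrow> nat" where "QQ xs = fold (\<lambda>i f. f \<circ> sw i) xs id"

lemma fold_sw: "fold (\<lambda>i f. f \<circ> sw i) xs (p :: nat \<Rightarrow> nat) = p \<circ> QQ xs"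
  unfolding QQ_def
proof (induct xs arbitrary: p)
  case Nil then show ?case by simp
next
  case (Cons x xs)
  show ?case using Cons[of "p \<circ> sw x"] Cons[of "sw x"] by (simp add: comp_assoc)
qed

lemma QQ_Nil[simp]: "QQ [] = id" by (simp add: QQ_def)
lemma QQ_Cons: "QQ (x # xs) = sw x \<circ> QQ xs"
  using fold_sw[of xs "sw x"] by (simp add: QQ_def)
lemma QQ_append: "QQ (xs @ ys) = QQ xs \<circ> QQ ys"
  using fold_sw[of ys "QQ xs"] by (simp add: QQ_def)
lemma QQ_rev: "QQ (rev xs) \<circ> QQ xs = id"
proof (induct xs)
  case Nil then show ?case by (simp add: QQ_def)
next
  case (Cons x xs)
  have "QQ (rev (x # xs)) \<circ> QQ (x # xs) = QQ (rev xs) \<circ> (sw x \<circ> sw x) \<circ> QQ xs"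
    by (simp add: QQ_append QQ_Cons comp_assoc)
  also have "sw x \<circ> sw x = id" by (rule ext) simp
  finally show ?case using Cons by simp
qed

lemma QQ_vals: "k < l \<Longrightarrow> QQ (rev [k+1..<l]) k = k \<and> QQ (rev [k+1..<l]) (Suc k) = l"
proof (induct l)
  case 0 then show ?case by simp
next
  case (Suc l)
  show ?case
  proof (cases "k < l")
    case False
    then have "l = k" using Suc by simp
    then show ?thesis by (simp add: QQ_def)
  next
    case True
    have e: "rev [k+1..<Suc l] = l # rev [k+1..<l]" using True by simp
    show ?thesis using Suc(1)[OF True] True by (simp add: e QQ_Cons sw_def)
  qed
qed

lemma act_rh: "\<forall>i\<in>set xs. rng n i \<Longrightarrow> vb n p \<Longrightarrow>
  act n (map (\<lambda>i. (Rh i, b)) xs) (E, p, w) = (E, p \<circ> QQ xs, w) \<and> vb n (p \<circ> QQ xs)"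
proof (induct xs arbitrary: p)
  case Nil then show ?case by (simp add: QQ_def)
next
  case (Cons x xs)
  have v: "vb n (p \<circ> sw x)" using Cons by simp
  have "act n (map (\<lambda>i. (Rh i, b)) (x # xs)) (E, p, w) = act n (map (\<lambda>i. (Rh i, b)) xs) (E, p \<circ> sw x, w)"
    using Cons by (simp add: la_simps)
  then show ?case using Cons(1)[OF _ v] Cons(2) by (simp add: QQ_Cons comp_assoc)
qed

lemma winv_rh: "winv (map (\<lambda>i. (Rh i, c)) xs) = map (\<lambda>i. (Rh i, \<not> c)) (rev xs)"
  by (induct xs) auto

lemma vb_id: "vb n id" by (simp add: vb_def)

lemma cw_empty[simp]: "cw {} a b = [((a, b), True)]" by (simp add: cw_def)

lemma rng_R: "\<forall>i\<in>set (rev [k+1..<l]). rng n i" "\<forall>i\<in>set [k+1..<l]. rng n i" if "l \<le> n" for k l n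
  using that by (auto simp: rng_def)

lemma act_lw: assumes "vr n k" "vr n l" "k \<noteq> l"
  shows "act n (lw ((k, l), b)) ({}, id, w) = ({}, id, w @ [((k, l), b)])"
proof (cases "k < l")
  case True
  let ?R = "[Suc k..<l]"
  let ?P = "QQ (rev ?R)"
  have lk: "l \<le> n" "rng n k" using assms True by (auto simp: vr_def rng_def)
  have pv: "?P k = k" "?P (Suc k) = l" using QQ_vals[OF True] by auto
  have rh: "rhos k l = map (\<lambda>i. (Rh i, True)) (rev ?R)" by (simp add: rhos_def)
  have rrh: "rev (rhos k l) = map (\<lambda>i. (Rh i, True)) ?R" by (simp add: rhos_def rev_map)
  have a1: "act n (rhos k l) ({}, id, w') = ({}, ?P, w') \<and> vb n ?P" for w'
    using act_rh[OF rng_R(1)[where k=k and l=l and n=n, OF lk(1)] vb_id, of True "{}" w'] by (simp add: rh)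
  have a2: "act n (rev (rhos k l)) ({}, ?P, w') = ({}, id, w')" for w'
    using act_rh[OF rng_R(2)[where k=k and l=l and n=n, OF lk(1)] conjunct2[OF a1], of True "{}" w'] QQ_rev[of ?R] by (simp add: rrh)
  have a1': "act n (winv (rev (rhos k l))) ({}, id, w') = ({}, ?P, w')" for w'
    using act_rh[OF rng_R(1)[where k=k and l=l and n=n, OF lk(1)] vb_id, of False "{}" w'] by (simp add: rrh winv_rh)
  have a2': "act n (winv (rhos k l)) ({}, ?P, w') = ({}, id, w')" for w'
    using act_rh[OF rng_R(2)[where k=k and l=l and n=n, OF lk(1)] conjunct2[OF a1], of False "{}" w'] QQ_rev[of ?R] by (simp add: rh winv_rh)
  have vP: "vb n ?P" using a1 by blast
  show ?thesis
  proof (cases b)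
    case True
    have m: "act n (lam_up k) ({}, ?P, w) = ({}, ?P, w @ [((k, l), True)])"
      using vP lk pv by (simp add: lam_up_def la_simps)
    show ?thesis using True \<open>k < l\<close> by (simp add: lam_word_def act_append a1 m a2)
  next
    case False
    have m: "act n (winv (lam_up k)) ({}, ?P, w) = ({}, ?P, w @ [((k, l), False)])"
      using vP lk pv by (simp add: lam_up_def la_simps)
    show ?thesis using False \<open>k < l\<close> by (simp add: lam_word_def act_append a1' m a2')
  qed
next
  case False
  then have lt: "l < k" using assms by simp
  let ?R = "[Suc l..<k]"
  let ?P = "QQ (rev ?R)"
  have lk: "k \<le> n" "rng n l" using assms lt by (auto simp: vr_def rng_def)
  have pv: "?P l = l" "?P (Suc l) = k" using QQ_vals[OF lt] by auto
  have rh: "rhos l k = map (\<lambda>i. (Rh i, True)) (rev ?R)" by (simp add: rhos_def)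
  have rrh: "rev (rhos l k) = map (\<lambda>i. (Rh i, True)) ?R" by (simp add: rhos_def rev_map)
  have a1: "act n (rhos l k) ({}, id, w') = ({}, ?P, w') \<and> vb n ?P" for w'
    using act_rh[OF rng_R(1)[where k=l and l=k and n=n, OF lk(1)] vb_id, of True "{}" w'] by (simp add: rh)
  have a2: "act n (rev (rhos l k)) ({}, ?P, w') = ({}, id, w')" for w'
    using act_rh[OF rng_R(2)[where k=l and l=k and n=n, OF lk(1)] conjunct2[OF a1], of True "{}" w'] QQ_rev[of ?R] by (simp add: rrh)
  have a1': "act n (winv (rev (rhos l k))) ({}, id, w') = ({}, ?P, w')" for w'
    using act_rh[OF rng_R(1)[where k=l and l=k and n=n, OF lk(1)] vb_id, of False "{}" w'] by (simp add: rrh winv_rh)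
  have a2': "act n (winv (rhos l k)) ({}, ?P, w') = ({}, id, w')" for w'
    using act_rh[OF rng_R(2)[where k=l and l=k and n=n, OF lk(1)] conjunct2[OF a1], of False "{}" w'] QQ_rev[of ?R] by (simp add: rh winv_rh)
  have vP: "vb n ?P" using a1 by blast
  show ?thesis
  proof (cases b)
    case True
    have m: "act n (lam_down l) ({}, ?P, w) = ({}, ?P, w @ [((k, l), True)])"
      using vP lk pv by (simp add: lam_down_def lam_up_def la_simps)
    show ?thesis using True lt by (simp add: lam_word_def act_append a1 m a2)
  next
    case False
    have m: "act n (winv (lam_down l)) ({}, ?P, w) = ({}, ?P, w @ [((k, l), False)])"
      using vP lk pv by (simp add: lam_down_def lam_up_def la_simps)
    show ?thesis using False lt by (simp add: lam_word_def act_append a1' m a2')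
  qed
qed

lemma act_subst: "set u \<subseteq> vp_gens n \<times> UNIV \<Longrightarrow> act n (subst u) ({}, id, w) = ({}, id, w @ u)"
proof (induct u arbitrary: w)
  case Nil then show ?case by simp
next
  case (Cons x u)
  obtain k l b where x: "x = ((k, l), b)" by (metis prod.collapse)
  have g: "vr n k" "vr n l" "k \<noteq> l" using Cons(2) x by (auto simp: vp_gens_def vr_def)
  have "act n (subst (x # u)) ({}, id, w) = act n (subst u) (act n (lw x) ({}, id, w))"
    by (simp add: act_append)
  also have "... = act n (subst u) ({}, id, w @ [x])" using act_lw[OF g, of b w] x by simp
  also have "... = ({}, id, (w @ [x]) @ u)" using Cons(1)[of "w @ [x]"] Cons(2) by (simp add: id_def)
  finally show ?case by (simp add: id_def)
qed

lemma subst_inj: "set u \<subseteq> vp_gens n \<times> UNIV \<Longrightarrow> set v \<subseteq> vp_gens n \<times> UNIV \<Longrightarrow>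
  TE n (subst u) (subst v) \<Longrightarrow> VE n u v"
proof -
  assume u: "set u \<subseteq> vp_gens n \<times> UNIV" and v: "set v \<subseteq> vp_gens n \<times> UNIV" and e: "TE n (subst u) (subst v)"
  have "seq n (act n (subst u) ({}, id, [])) (act n (subst v) ({}, id, []))" by (rule act_wd[OF e])
  then show ?thesis by (simp add: act_subst[OF u] act_subst[OF v])
qed


lemma carrier_TVB: "carrier (TVB n) = {wclass (tvb_rels n) w | w. set w \<subseteq> tvb_gens n \<times> UNIV}"
  by (simp add: TVB_def carrier_pg)
lemma carrier_VP: "carrier (VP n) = {wclass (vp_rels n) w | w. set w \<subseteq> vp_gens n \<times> UNIV}"
  by (simp add: VP_def carrier_pg)
lemma group_TVB: "group (TVB n)" by (simp add: TVB_def group_pg)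
lemma group_VP: "group (VP n)" by (simp add: VP_def group_pg)
lemma mult_TVB: "wclass (tvb_rels n) u \<otimes>\<^bsub>TVB n\<^esub> wclass (tvb_rels n) v = wclass (tvb_rels n) (u @ v)"
  by (simp add: TVB_def mult_pg)
lemma mult_VP: "wclass (vp_rels n) u \<otimes>\<^bsub>VP n\<^esub> wclass (vp_rels n) v = wclass (vp_rels n) (u @ v)"
  by (simp add: VP_def mult_pg)
lemma one_TVB: "\<one>\<^bsub>TVB n\<^esub> = wclass (tvb_rels n) []" by (simp add: TVB_def one_pg)
lemma one_VP: "\<one>\<^bsub>VP n\<^esub> = wclass (vp_rels n) []" by (simp add: VP_def one_pg)
lemma inv_TVB: "set w \<subseteq> tvb_gens n \<times> UNIV \<Longrightarrow> inv\<^bsub>TVB n\<^esub> (wclass (tvb_rels n) w) = wclass (tvb_rels n) (winv w)"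
  by (simp add: TVB_def inv_pg)

lemma lam_word_gens: "vr n k \<Longrightarrow> vr n l \<Longrightarrow> k \<noteq> l \<Longrightarrow> set (lam_word k l) \<subseteq> tvb_gens n \<times> UNIV"
  by (auto simp: lam_word_def rhos_def lam_up_def lam_down_def tvb_gens_def vr_def)

lemma lw_gens: "vr n k \<Longrightarrow> vr n l \<Longrightarrow> k \<noteq> l \<Longrightarrow> set (lw ((k, l), b)) \<subseteq> tvb_gens n \<times> UNIV"
  using lam_word_gens[of n k l] by (cases b) auto

lemma vp_gens_vr: "(k, l) \<in> vp_gens n \<Longrightarrow> vr n k \<and> vr n l \<and> k \<noteq> l"
  by (auto simp: vp_gens_def vr_def)

lemma subst_gens: "set u \<subseteq> vp_gens n \<times> UNIV \<Longrightarrow> set (subst u) \<subseteq> tvb_gens n \<times> UNIV"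
proof (induct u)
  case Nil then show ?case by simp
next
  case (Cons x u)
  obtain k l b where x: "x = ((k, l), b)" by (metis prod.collapse)
  have g: "vr n k" "vr n l" "k \<noteq> l" using Cons(2) x vp_gens_vr by auto
  show ?case using Cons lw_gens[OF g, of b] x by simp
qed

lemma perm_word_gen: "foldr (\<lambda>(g, b) p. letter_perm g \<circ> p) w p = perm_word w \<circ> p"
  by (induct w arbitrary: p) (auto simp: perm_word_def comp_assoc)

lemma perm_word_append: "perm_word (a @ b) = perm_word a \<circ> perm_word b"
  using perm_word_gen[of a "perm_word b"] by (simp add: perm_word_def)

lemma perm_word_Cons: "perm_word ((g, b) # w) = letter_perm g \<circ> perm_word w"
  by (simp add: perm_word_def)

lemma lp_sw: "letter_perm (Rh i) = sw i" "letter_perm (S i) = sw i"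
  by (auto simp: sw_def)

lemma perm_rh: "perm_word (map (\<lambda>i. (Rh i, c)) xs) = QQ xs"
  by (induct xs) (simp_all add: perm_word_Cons lp_sw QQ_Cons del: letter_perm.simps, simp add: perm_word_def)

lemma perm_lw: "k \<noteq> l \<Longrightarrow> perm_word (lw ((k, l), b)) = id"
proof -
  assume kl: "k \<noteq> l"
  have sw2: "sw i \<circ> sw i = id" for i by (rule ext) simp
  have e1: "perm_word [(Rh i, c), (S i, d)] = id" "perm_word [(S i, d), (Rh i, c)] = id" for i c d
    by (simp_all add: perm_word_Cons lp_sw sw2 del: letter_perm.simps, simp_all add: perm_word_def sw2)
  have e2: "perm_word [(Rh i, c), (Rh i, c), (S i, d), (Rh i, c)] = id" "perm_word [(Rh i, c), (S i, d), (Rh i, c), (Rh i, c)] = id" for i c d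
    by (simp_all add: perm_word_Cons lp_sw comp_assoc sw2 del: letter_perm.simps, simp_all add: perm_word_def sw2)
  have r1: "perm_word (rhos a b) = QQ (rev [Suc a..<b])" "perm_word (rev (rhos a b)) = QQ [Suc a..<b]" for a b
    by (simp_all add: rhos_def perm_rh rev_map)
  have r2: "perm_word (winv (rhos a b)) = QQ [Suc a..<b]" "perm_word (winv (rev (rhos a b))) = QQ (rev [Suc a..<b])" for a b
    by (simp_all add: rhos_def winv_rh perm_rh rev_map)
  have q: "QQ (rev [Suc a..<b]) \<circ> QQ [Suc a..<b] = id" for a b by (rule QQ_rev)
  have u: "perm_word (lam_up a) = id" "perm_word (winv (lam_up a)) = id"
     "perm_word (lam_down a) = id" "perm_word (winv (lam_down a)) = id" for a
    using e1 e2 by (simp_all add: lam_up_def lam_down_def)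
  show ?thesis
    by (cases b; cases "k < l")
      (simp_all add: lam_word_def perm_word_append r1 r2 u q)
qed

lemma perm_subst: "set u \<subseteq> vp_gens n \<times> UNIV \<Longrightarrow> perm_word (subst u) = id"
proof (induct u)
  case Nil then show ?case by (simp add: perm_word_def)
next
  case (Cons x u)
  obtain k l b where x: "x = ((k, l), b)" by (metis prod.collapse)
  have g: "k \<noteq> l" using Cons(2) x vp_gens_vr by auto
  show ?case using Cons perm_lw[OF g, of b] x by (simp add: perm_word_append)
qed


definition ff :: "nat \<Rightarrow> (nat \<times> nat) word set \<Rightarrow> tvb_gen word set" where
  "ff n A = tvb_el n (subst (SOME u. u \<in> A))"

lemma ff_cls: "ff n (wclass (vp_rels n) u) = tvb_el n (subst u)"
proof -
  have "u \<in> wclass (vp_rels n) u" by (simp add: in_wclass we_refl)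
  then have "(SOME v. v \<in> wclass (vp_rels n) u) \<in> wclass (vp_rels n) u" by (rule someI)
  then have "VE n (SOME v. v \<in> wclass (vp_rels n) u) u" by (simp add: in_wclass)
  then have "TE n (subst (SOME v. v \<in> wclass (vp_rels n) u)) (subst u)" by (rule subst_wd)
  then show ?thesis by (simp add: ff_def tvb_el_def wclass_eq_iff)
qed

lemma carrier_VP_E: "A \<in> carrier (VP n) \<Longrightarrow> (\<And>u. A = wclass (vp_rels n) u \<Longrightarrow> set u \<subseteq> vp_gens n \<times> UNIV \<Longrightarrow> P) \<Longrightarrow> P"
  by (auto simp: carrier_VP)

lemma ff_carrier: "A \<in> carrier (VP n) \<Longrightarrow> ff n A \<in> carrier (TVB n)"
proof (erule carrier_VP_E)
  fix u assume "A = wclass (vp_rels n) u" "set u \<subseteq> vp_gens n \<times> UNIV"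
  then show "ff n A \<in> carrier (TVB n)"
    unfolding carrier_TVB using subst_gens[of u n] by (auto simp: ff_cls tvb_el_def)
qed

lemma ff_mult: "A \<in> carrier (VP n) \<Longrightarrow> B \<in> carrier (VP n) \<Longrightarrow> ff n (A \<otimes>\<^bsub>VP n\<^esub> B) = ff n A \<otimes>\<^bsub>TVB n\<^esub> ff n B"
  by (erule carrier_VP_E, erule carrier_VP_E) (simp add: mult_VP ff_cls tvb_el_def mult_TVB)

lemma ff_hom: "ff n \<in> hom (VP n) (TVB n)"
  by (auto simp: hom_def ff_carrier ff_mult)

lemma ff_gen: "ff n (vp_gen n k l) = lam_el n k l"
  by (simp add: vp_gen_def gw_def ff_cls lam_el_def)

lemma ff_inj: "inj_on (ff n) (carrier (VP n))"
proof (rule inj_onI)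
  fix A B assume a: "A \<in> carrier (VP n)" "B \<in> carrier (VP n)" "ff n A = ff n B"
  obtain u where u: "A = wclass (vp_rels n) u" "set u \<subseteq> vp_gens n \<times> UNIV" using a(1) by (rule carrier_VP_E)
  obtain v where v: "B = wclass (vp_rels n) v" "set v \<subseteq> vp_gens n \<times> UNIV" using a(2) by (rule carrier_VP_E)
  have "TE n (subst u) (subst v)" using a(3) by (simp add: u v ff_cls tvb_el_def wclass_eq_iff)
  then have "VE n u v" by (rule subst_inj[OF u(2) v(2)])
  then show "A = B" by (simp add: u v wclass_eq_iff)
qed

lemma ff_tvp: "A \<in> carrier (VP n) \<Longrightarrow> ff n A \<in> TVP n"
proof -
  assume a: "A \<in> carrier (VP n)"
  obtain u where u: "A = wclass (vp_rels n) u" "set u \<subseteq> vp_gens n \<times> UNIV" using a by (rule carrier_VP_E)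
  show ?thesis unfolding TVP_def
    using ff_carrier[OF a] subst_gens[OF u(2)] perm_subst[OF u(2)] by (auto simp: u ff_cls)
qed

lemma one_VP_carrier: "wclass (vp_rels n) [] \<in> carrier (VP n)" by (auto simp: carrier_VP)
lemma single_carrier: "(k, l) \<in> vp_gens n \<Longrightarrow> wclass (vp_rels n) [((k, l), b)] \<in> carrier (VP n)"
  by (auto simp: carrier_VP)

lemma ff_single_F: "(k, l) \<in> vp_gens n \<Longrightarrow> ff n (wclass (vp_rels n) [((k, l), False)]) = inv\<^bsub>TVB n\<^esub> (lam_el n k l)"
proof -
  assume g: "(k, l) \<in> vp_gens n"
  have "set (lam_word k l) \<subseteq> tvb_gens n \<times> UNIV" using vp_gens_vr[OF g] lam_word_gens by auto
  then show ?thesis by (simp add: ff_cls lam_el_def tvb_el_def inv_TVB)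
qed

lemma ff_cons: "set (x # u) \<subseteq> vp_gens n \<times> UNIV \<Longrightarrow>
  ff n (wclass (vp_rels n) (x # u)) = ff n (wclass (vp_rels n) [x]) \<otimes>\<^bsub>TVB n\<^esub> ff n (wclass (vp_rels n) u)"
  by (simp add: ff_cls tvb_el_def mult_TVB)

lemma kernel_part:
  assumes hp: "\<psi> \<in> hom ((TVB n)\<lparr>carrier := TVP n\<rparr>) (TVB n)"
    and h1: "\<forall>k l. (k, l) \<in> vp_gens n \<longrightarrow> \<psi> (lam_el n k l) = \<one>\<^bsub>TVB n\<^esub>"
  shows "ff n ` carrier (VP n) \<subseteq> kernel ((TVB n)\<lparr>carrier := TVP n\<rparr>) (TVB n) \<psi>"
proof -
  interpret T: group "TVB n" by (rule group_TVB)
  have hm: "\<psi> (x \<otimes>\<^bsub>TVB n\<^esub> y) = \<psi> x \<otimes>\<^bsub>TVB n\<^esub> \<psi> y" if "x \<in> TVP n" "y \<in> TVP n" for x y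
    using hp that by (simp add: hom_def)
  have hc: "\<psi> x \<in> carrier (TVB n)" if "x \<in> TVP n" for x
    using hp that by (auto simp: hom_def)
  have one_eq: "\<one>\<^bsub>TVB n\<^esub> = ff n (wclass (vp_rels n) [])" by (simp add: ff_cls tvb_el_def one_TVB)
  have one_tvp: "\<one>\<^bsub>TVB n\<^esub> \<in> TVP n" unfolding one_eq by (rule ff_tvp[OF one_VP_carrier])
  have p1: "\<psi> \<one>\<^bsub>TVB n\<^esub> = \<one>\<^bsub>TVB n\<^esub>"
  proof -
    have "\<psi> \<one>\<^bsub>TVB n\<^esub> \<otimes>\<^bsub>TVB n\<^esub> \<psi> \<one>\<^bsub>TVB n\<^esub> = \<psi> \<one>\<^bsub>TVB n\<^esub>"
      using hm[OF one_tvp one_tvp] by simp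
    then show ?thesis using hc[OF one_tvp] by simp
  qed
  have single: "\<psi> (ff n (wclass (vp_rels n) [x])) = \<one>\<^bsub>TVB n\<^esub>" if "x \<in> vp_gens n \<times> UNIV" for x
  proof -
    obtain k l b where x: "x = ((k, l), b)" by (metis prod.collapse)
    have g: "(k, l) \<in> vp_gens n" using that x by auto
    have aT: "ff n (wclass (vp_rels n) [((k, l), True)]) = lam_el n k l"
      by (simp add: ff_cls lam_el_def)
    show ?thesis
    proof (cases b)
      case True then show ?thesis using h1 g aT x by simp
    next
      case False
      let ?a = "ff n (wclass (vp_rels n) [((k, l), True)])"
      let ?b = "ff n (wclass (vp_rels n) [((k, l), False)])"
      have ta: "?a \<in> TVP n" "?b \<in> TVP n" using ff_tvp[OF single_carrier[OF g]] by auto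
      have "?a \<otimes>\<^bsub>TVB n\<^esub> ?b = ff n (wclass (vp_rels n) [((k, l), True), ((k, l), False)])"
        by (simp add: ff_cls tvb_el_def mult_TVB)
      also have "wclass (vp_rels n) [((k, l), True), ((k, l), False)] = wclass (vp_rels n) []"
        using we_cancel1[of "vp_rels n" "(k, l)" True] by (simp add: wclass_eq_iff)
      finally have "?a \<otimes>\<^bsub>TVB n\<^esub> ?b = \<one>\<^bsub>TVB n\<^esub>" using one_eq by simp
      then have "\<psi> ?a \<otimes>\<^bsub>TVB n\<^esub> \<psi> ?b = \<one>\<^bsub>TVB n\<^esub>" using hm[OF ta] p1 by simp
      then show ?thesis using h1 g aT x False hc[OF ta(2)] by simp
    qed
  qed
  have all: "\<psi> (ff n (wclass (vp_rels n) u)) = \<one>\<^bsub>TVB n\<^esub>" if "set u \<subseteq> vp_gens n \<times> UNIV" for u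
    using that
  proof (induct u)
    case Nil then show ?case using one_eq p1 by simp
  next
    case (Cons x u)
    have c1: "ff n (wclass (vp_rels n) [x]) \<in> TVP n" using Cons(2) by (intro ff_tvp) (auto simp: carrier_VP)
    have c2: "ff n (wclass (vp_rels n) u) \<in> TVP n" using Cons(2) by (intro ff_tvp) (auto simp: carrier_VP)
    show ?case using ff_cons[OF Cons(2)] hm[OF c1 c2] single[of x] Cons hc[OF c2] by simp
  qed
  show ?thesis
  proof
    fix y assume "y \<in> ff n ` carrier (VP n)"
    then obtain A where A: "A \<in> carrier (VP n)" "y = ff n A" by blast
    obtain u where u: "A = wclass (vp_rels n) u" "set u \<subseteq> vp_gens n \<times> UNIV" using A(1) by (rule carrier_VP_E)
    show "y \<in> kernel ((TVB n)\<lparr>carrier := TVP n\<rparr>) (TVB n) \<psi>"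
      using ff_tvp[OF A(1)] all[OF u(2)] by (simp add: kernel_def A(2) u)
  qed
qed



lemma gen_part:
  "ff n ` carrier (VP n) = generate (TVB n) {lam_el n k l | k l. (k, l) \<in> vp_gens n}"
  (is "_ = generate _ ?L")
proof
  interpret T: group "TVB n" by (rule group_TVB)
  interpret V: group "VP n" by (rule group_VP)
  have one_eq: "\<one>\<^bsub>TVB n\<^esub> = ff n (wclass (vp_rels n) [])" by (simp add: ff_cls tvb_el_def one_TVB)
  have sg: "ff n (wclass (vp_rels n) [x]) \<in> generate (TVB n) ?L" if "x \<in> vp_gens n \<times> UNIV" for x
  proof -
    obtain k l b where x: "x = ((k, l), b)" by (metis prod.collapse)
    have g: "(k, l) \<in> vp_gens n" using that x by auto
    have aT: "ff n (wclass (vp_rels n) [((k, l), True)]) = lam_el n k l"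
      by (simp add: ff_cls lam_el_def)
    have inL: "lam_el n k l \<in> ?L" using g by blast
    show ?thesis
    proof (cases b)
      case True then show ?thesis using aT x inL by (simp add: generate.incl)
    next
      case False then show ?thesis using ff_single_F[OF g] x inL by (simp add: generate.inv)
    qed
  qed
  show "ff n ` carrier (VP n) \<subseteq> generate (TVB n) ?L"
  proof
    fix y assume "y \<in> ff n ` carrier (VP n)"
    then obtain A where A: "A \<in> carrier (VP n)" "y = ff n A" by blast
    obtain u where u: "A = wclass (vp_rels n) u" "set u \<subseteq> vp_gens n \<times> UNIV" using A(1) by (rule carrier_VP_E)
    have "ff n (wclass (vp_rels n) u) \<in> generate (TVB n) ?L" using u(2)
    proof (induct u)
      case Nil then show ?case using one_eq generate.one[of "TVB n" ?L] by simp
    next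
      case (Cons x u)
      then show ?case using ff_cons[OF Cons(2)] sg[of x] by (simp add: generate.eng)
    qed
    then show "y \<in> generate (TVB n) ?L" using A u by simp
  qed
  show "generate (TVB n) ?L \<subseteq> ff n ` carrier (VP n)"
  proof
    fix y assume "y \<in> generate (TVB n) ?L"
    then show "y \<in> ff n ` carrier (VP n)"
    proof (induct rule: generate.induct)
      case one then show ?case using one_eq one_VP_carrier by blast
    next
      case (incl h)
      then obtain k l where h: "h = lam_el n k l" "(k, l) \<in> vp_gens n" by blast
      then have "h = ff n (wclass (vp_rels n) [((k, l), True)])" by (simp add: ff_cls lam_el_def)
      then show ?case using single_carrier[OF h(2)] by blast
    next
      case (inv h)
      then obtain k l where h: "h = lam_el n k l" "(k, l) \<in> vp_gens n" by blast
      then have "inv\<^bsub>TVB n\<^esub> h = ff n (wclass (vp_rels n) [((k, l), False)])" by (simp add: ff_single_F)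
      then show ?case using single_carrier[OF h(2)] by blast
    next
      case (eng h1 h2)
      then obtain A B where "A \<in> carrier (VP n)" "h1 = ff n A" "B \<in> carrier (VP n)" "h2 = ff n B" by blast
      then show ?case using ff_mult[of A n B] V.m_closed by (metis image_eqI)
    qed
  qed
qed

theorem mainTheorem8:
  fixes n :: nat
  assumes "n \<ge> 2"
  shows "\<exists>f. f \<in> hom (VP n) (TVB n)
          \<and> (\<forall>k l. (k, l) \<in> vp_gens n \<longrightarrow> f (vp_gen n k l) = lam_el n k l)
          \<and> inj_on f (carrier (VP n))
          \<and> f ` carrier (VP n) \<subseteq> TVP n
          \<and> (\<forall>\<psi>. \<psi> \<in> hom ((TVB n)\<lparr>carrier := TVP n\<rparr>) (TVB n)
                 \<and> (\<forall>k l. (k, l) \<in> vp_gens n \<longrightarrow> \<psi> (lam_el n k l) = \<one>\<^bsub>TVB n\<^esub>)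
                 \<and> (\<forall>j. 1 \<le> j \<and> j \<le> n \<longrightarrow> \<psi> (gamma_el n j) = gamma_el n j)
               \<longrightarrow> f ` carrier (VP n) \<subseteq> kernel ((TVB n)\<lparr>carrier := TVP n\<rparr>) (TVB n) \<psi>)
          \<and> VP n \<cong> (TVB n)\<lparr>carrier := generate (TVB n) {lam_el n k l | k l. (k, l) \<in> vp_gens n}\<rparr>"
proof (intro exI[of _ "ff n"] conjI allI impI)
  show "ff n \<in> hom (VP n) (TVB n)" by (rule ff_hom)
  show "\<And>k l. (k, l) \<in> vp_gens n \<Longrightarrow> ff n (vp_gen n k l) = lam_el n k l" by (rule ff_gen)
  show "inj_on (ff n) (carrier (VP n))" by (rule ff_inj)
  show "ff n ` carrier (VP n) \<subseteq> TVP n" using ff_tvp by blast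
  show "\<And>\<psi>. \<psi> \<in> hom ((TVB n)\<lparr>carrier := TVP n\<rparr>) (TVB n)
                 \<and> (\<forall>k l. (k, l) \<in> vp_gens n \<longrightarrow> \<psi> (lam_el n k l) = \<one>\<^bsub>TVB n\<^esub>)
                 \<and> (\<forall>j. 1 \<le> j \<and> j \<le> n \<longrightarrow> \<psi> (gamma_el n j) = gamma_el n j) \<Longrightarrow>
        ff n ` carrier (VP n) \<subseteq> kernel ((TVB n)\<lparr>carrier := TVP n\<rparr>) (TVB n) \<psi>"
    using kernel_part by blast
  let ?H = "(TVB n)\<lparr>carrier := generate (TVB n) {lam_el n k l | k l. (k, l) \<in> vp_gens n}\<rparr>"
  have h: "ff n \<in> hom (VP n) ?H"
    using ff_hom[of n] gen_part[of n] by (auto simp: hom_def)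
  have b: "bij_betw (ff n) (carrier (VP n)) (carrier ?H)"
    using ff_inj[of n] gen_part[of n] by (simp add: bij_betw_def)
  show "VP n \<cong> ?H" by (rule is_isoI[OF isoI[OF h b]])
qed


end
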